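(* Let $T$, $\mathcal{S}=\mathcal{S}_+\cup\mathcal{S}_-$, $\Psi$, $\lambda,\mu$ and the matrices $E,F,G,H$ be as in the context, and let $K:=T_{++}+\Psi T_{-+}$. Let $\mathcal{R}_D$ be the minimal nonnegative solution of $\mathcal{R}^2D_{-1}+\mathcal{R}D_0+D_1=\mathcal{R}$, where $$D_{-1}=\begin{bmatrix}0&0\\0&F\end{bmatrix},\quad D_0=\begin{bmatrix}0&G\\H&0\end{bmatrix},\quad D_1=\begin{bmatrix}E&0\\0&0\end{bmatrix}.$$ Then $$\mathcal{R}_D=\begin{bmatrix}R_1&R_1\Psi\\0&0\end{bmatrix},\qquad\text{where}\quad R_1:=E(I-\Psi H)^{-1}=(I-\mu^{-1}K)^{-1}(I+\lambda^{-1}K).$$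
   Context: $T$ is the generator of a continuous-time Markov chain on a finite set $\mathcal{S}=\mathcal{S}_+\cup\mathcal{S}_-$ (disjoint, both nonempty), partitioned into blocks $T_{++},T_{+-},T_{-+},T_{--}$ according to $\mathcal{S}_\pm$. $\Psi$ is the minimal nonnegative solution of $T_{+-}+\Psi T_{--}+T_{++}\Psi+\Psi T_{-+}\Psi=0$ (the first-return probability matrix of the unit-rate fluid queue with phase generator $T$, rates $+1$ on $\mathcal{S}_+$ and $-1$ on $\mathcal{S}_-$). $\lambda,\mu>0$ satisfy $\lambda,\mu\ge\max_i|T_{ii}|$. The matrices $E$ ($|\mathcal{S}_+|\times|\mathcal{S}_+|$), $G$ ($|\mathcal{S}_+|\times|\mathcal{S}_-|$), $H$ ($|\mathcal{S}_-|\times|\mathcal{S}_+|$), $F$ ($|\mathcal{S}_-|\times|\mathcal{S}_-|$) are defined by $\begin{bmatrix}E&G\\H&F\end{bmatrix}=\begin{bmatrix}I-\mu^{-1}T_{++}&-\lambda^{-1}T_{+-}\\-\mu^{-1}T_{-+}&I-\lambda^{-1}T_{--}\end{bmatrix}^{-1}\begin{bmatrix}I+\lambda^{-1}T_{++}&\mu^{-1}T_{+-}\\\lambda^{-1}T_{-+}&I+\mu^{-1}T_{--}\end{bmatrix}$. $D_{-1},D_0,D_1$ are the transition blocks of a quasi-birth-death process (levels in $\mathbb{Z}+1/2$, phases in $\mathcal{S}$), and $\mathcal{R}_D$ is its $\mathcal{R}$-matrix (expected numbers of visits to the next level up before returning to the starting level). *)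

theory Defs
  imports "Jordan_Normal_Form.Matrix"
begin

text \<open>Matrix inverse (the two-sided inverse of a square matrix; junk if none exists).\<close>
definition minv :: "real mat \<Rightarrow> real mat" where
  "minv A = (SOME B. B \<in> carrier_mat (dim_row A) (dim_row A) \<and>
                      A * B = 1\<^sub>m (dim_row A) \<and> B * A = 1\<^sub>m (dim_row A))"

definition nonneg_mat :: "real mat \<Rightarrow> bool" where
  "nonneg_mat A \<longleftrightarrow> (\<forall>i<dim_row A. \<forall>j<dim_col A. A $$ (i,j) \<ge> 0)"

definition le_mat :: "real mat \<Rightarrow> real mat \<Rightarrow> bool" where
  "le_mat A B \<longleftrightarrow> dim_row A = dim_row B \<and> dim_col A = dim_col B \<and>
     (\<forall>i<dim_row A. \<forall>j<dim_col A. A $$ (i,j) \<le> B $$ (i,j))"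

definition min_nonneg_sol :: "nat \<Rightarrow> nat \<Rightarrow> (real mat \<Rightarrow> bool) \<Rightarrow> real mat \<Rightarrow> bool" where
  "min_nonneg_sol r c P X \<longleftrightarrow>
     X \<in> carrier_mat r c \<and> nonneg_mat X \<and> P X \<and>
     (\<forall>Y. Y \<in> carrier_mat r c \<and> nonneg_mat Y \<and> P Y \<longrightarrow> le_mat X Y)"

definition generator :: "nat \<Rightarrow> real mat \<Rightarrow> bool" where
  "generator n T \<longleftrightarrow> T \<in> carrier_mat n n \<and>
     (\<forall>i<n. \<forall>j<n. i \<noteq> j \<longrightarrow> T $$ (i,j) \<ge> 0) \<and>
     (\<forall>i<n. (\<Sum>j<n. T $$ (i,j)) = 0)"

end

theory Submission
  imports Defs "Jordan_Normal_Form.Determinant"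
begin

lemma mult_vec_sum: "A \<in> carrier_mat n m \<Longrightarrow> x \<in> carrier_vec m \<Longrightarrow> i < n \<Longrightarrow>
   (A *\<^sub>v x) $ i = (\<Sum>j<m. A $$ (i,j) * x $ j)"
  by (auto simp: scalar_prod_def lessThan_atLeast0 intro!: sum.cong)

lemma zmat_nonneg:
  fixes A :: "real mat" and v x :: "real vec"
  assumes A: "A \<in> carrier_mat n n" and off: "\<forall>i<n. \<forall>j<n. i\<noteq>j \<longrightarrow> A$$(i,j) \<le> 0"
    and v: "v \<in> carrier_vec n" "\<forall>i<n. v$i > 0" and Av: "\<forall>i<n. (A *\<^sub>v v)$i > 0"
    and x: "x \<in> carrier_vec n" and Ax: "\<forall>i<n. (A *\<^sub>v x)$i \<ge> 0"
  shows "\<forall>i<n. x$i \<ge> 0"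
proof (rule ccontr)
  assume "\<not> ?thesis"
  then obtain i1 where i1: "i1 < n" "x$i1 < 0" by auto
  define t where "t = Min ((\<lambda>i. x$i / v$i) ` {..<n})"
  have fin: "finite ((\<lambda>i. x$i / v$i) ` {..<n})" "(\<lambda>i. x$i / v$i) ` {..<n} \<noteq> {}" using i1 by auto
  then have "t \<in> (\<lambda>i. x$i / v$i) ` {..<n}" unfolding t_def by (rule Min_in)
  then obtain i0 where i0: "i0 < n" "t = x$i0 / v$i0" by auto
  have tle: "t \<le> x$j / v$j" if "j < n" for j unfolding t_def using fin that by auto
  have "t \<le> x$i1 / v$i1" using tle i1 by auto
  also have "\<dots> < 0" using i1 v by (simp add: divide_neg_pos)
  finally have t0: "t < 0" .
  have xj: "x$j \<ge> t * v$j" if "j < n" for j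
    using tle[OF that] v that by (simp add: pos_divide_le_eq mult.commute le_divide_eq)
  have xi0: "x$i0 = t * v$i0" using i0 v by auto
  have "(A *\<^sub>v x)$i0 = (\<Sum>j<n. A $$ (i0,j) * x $ j)" using mult_vec_sum[OF A x i0(1)] .
  also have "\<dots> \<le> (\<Sum>j<n. A $$ (i0,j) * (t * v $ j))"
  proof (rule sum_mono)
    fix j assume j: "j \<in> {..<n}"
    show "A $$ (i0,j) * x $ j \<le> A $$ (i0,j) * (t * v $ j)"
    proof (cases "j = i0")
      case True then show ?thesis using xi0 by simp
    next
      case False then have "A $$ (i0,j) \<le> 0" using off i0 j by auto
      then show ?thesis using xj j by (simp add: mult_left_mono_neg)
    qed
  qed
  also have "\<dots> = t * (\<Sum>j<n. A $$ (i0,j) * v $ j)" by (simp add: sum_distrib_left algebra_simps)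
  also have "\<dots> = t * (A *\<^sub>v v)$i0" using mult_vec_sum[OF A v(1) i0(1)] by simp
  also have "\<dots> < 0" using Av i0 by (intro mult_neg_pos[OF t0]) auto
  finally show False using Ax i0 by auto
qed

lemma minv_eq:
  fixes A B :: "real mat"
  assumes A: "A \<in> carrier_mat n n" and B: "B \<in> carrier_mat n n" and AB: "A * B = 1\<^sub>m n"
  shows "minv A = B" "invertible_mat A" "A * minv A = 1\<^sub>m n" "minv A * A = 1\<^sub>m n"
proof -
  have BA: "B * A = 1\<^sub>m n" using mat_mult_left_right_inverse[OF A B AB] .
  have dr: "dim_row A = n" using A by auto
  have ex: "\<exists>C. C \<in> carrier_mat (dim_row A) (dim_row A) \<and> A * C = 1\<^sub>m (dim_row A) \<and> C * A = 1\<^sub>m (dim_row A)"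
    using B AB BA dr by auto
  let ?C = "minv A"
  have C: "?C \<in> carrier_mat n n" "A * ?C = 1\<^sub>m n" "?C * A = 1\<^sub>m n"
    using someI_ex[OF ex] dr unfolding minv_def by auto
  have "?C = ?C * (A * B)" using C by (simp add: AB)
  also have "\<dots> = (?C * A) * B" using C A B by (simp add: assoc_mult_mat[symmetric])
  also have "\<dots> = B" using C B by simp
  finally show "minv A = B" .
  show "invertible_mat A" unfolding invertible_mat_def inverts_mat_def using A B AB BA by auto
  show "A * minv A = 1\<^sub>m n" "minv A * A = 1\<^sub>m n" using C by auto
qed

lemma zmat_inv:
  fixes A :: "real mat" and v :: "real vec"
  assumes A: "A \<in> carrier_mat n n" and off: "\<forall>i<n. \<forall>j<n. i\<noteq>j \<longrightarrow> A$$(i,j) \<le> 0"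
    and v: "v \<in> carrier_vec n" "\<forall>i<n. v$i > 0" and Av: "\<forall>i<n. (A *\<^sub>v v)$i > 0"
  shows "invertible_mat A" "minv A \<in> carrier_mat n n" "A * minv A = 1\<^sub>m n" "minv A * A = 1\<^sub>m n"
    "nonneg_mat (minv A)"
proof -
  have ker: "w = 0\<^sub>v n" if w: "w \<in> carrier_vec n" "A *\<^sub>v w = 0\<^sub>v n" for w
  proof -
    have "\<forall>i<n. w$i \<ge> 0" by (rule zmat_nonneg[OF A off v Av w(1)], use w A in auto)
    moreover have "\<forall>i<n. (-w)$i \<ge> 0"
    proof (rule zmat_nonneg[OF A off v Av])
      show "- w \<in> carrier_vec n" using w by auto
      show "\<forall>i<n. 0 \<le> (A *\<^sub>v - w) $ i"
      proof (intro allI impI)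
        fix i assume i: "i < n"
        have "(A *\<^sub>v - w) $ i = (\<Sum>j<n. A $$ (i,j) * (- w) $ j)" using mult_vec_sum[OF A _ i] w by auto
        also have "\<dots> = - (\<Sum>j<n. A $$ (i,j) * w $ j)" using w by (simp add: sum_negf[symmetric])
        also have "\<dots> = - (A *\<^sub>v w) $ i" using mult_vec_sum[OF A w(1) i] by simp
        finally show "0 \<le> (A *\<^sub>v - w) $ i" using w i by simp
      qed
    qed
    ultimately show ?thesis using w by (intro eq_vecI) force+
  qed
  have "det A \<noteq> 0" using det_0_iff_vec_prod_zero_field[OF A] ker by auto
  from det_non_zero_imp_unit[OF A this, of "()"]
  obtain B where B: "B \<in> carrier_mat n n" "A * B = 1\<^sub>m n"
    unfolding Units_def ring_mat_def by auto
  note m = minv_eq[OF A B]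
  show "invertible_mat A" "A * minv A = 1\<^sub>m n" "minv A * A = 1\<^sub>m n" using m by auto
  show Bc: "minv A \<in> carrier_mat n n" using m B by auto
  show "nonneg_mat (minv A)" unfolding nonneg_mat_def
  proof (intro allI impI)
    fix i j assume i: "i < dim_row (minv A)" and j: "j < dim_col (minv A)"
    have c: "col (minv A) j \<in> carrier_vec n" using Bc by auto
    have "A *\<^sub>v col (minv A) j = col (A * minv A) j" using A Bc j by (intro eq_vecI) auto
    also have "\<dots> = unit_vec n j" using m Bc j by auto
    finally have "\<forall>i<n. col (minv A) j $ i \<ge> 0"
      by (intro zmat_nonneg[OF A off v Av c]) (simp add: unit_vec_def)
    then show "minv A $$ (i,j) \<ge> 0" using i j Bc by auto
  qed
qed

lemma mult_mat_sum: "A \<in> carrier_mat r k \<Longrightarrow> B \<in> carrier_mat k c \<Longrightarrow> i < r \<Longrightarrow> j < c \<Longrightarrow>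
   (A * B) $$ (i,j) = (\<Sum>l<k. A $$ (i,l) * B $$ (l,j))"
  by (auto simp: scalar_prod_def lessThan_atLeast0 intro!: sum.cong)

lemma nonneg_matI: "(\<And>i j. i < dim_row A \<Longrightarrow> j < dim_col A \<Longrightarrow> A $$ (i,j) \<ge> 0) \<Longrightarrow> nonneg_mat A"
  unfolding nonneg_mat_def by auto

lemma nonneg_matD: "nonneg_mat A \<Longrightarrow> i < dim_row A \<Longrightarrow> j < dim_col A \<Longrightarrow> A $$ (i,j) \<ge> 0"
  unfolding nonneg_mat_def by auto

lemma nonneg_mult: assumes "A \<in> carrier_mat r k" "B \<in> carrier_mat k c" "nonneg_mat A" "nonneg_mat B"
  shows "nonneg_mat (A * B)"
proof (rule nonneg_matI)
  fix i j assume "i < dim_row (A * B)" "j < dim_col (A * B)"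
  then have ij: "i < r" "j < c" using assms by auto
  show "(A * B) $$ (i,j) \<ge> 0" unfolding mult_mat_sum[OF assms(1,2) ij]
    using assms ij by (intro sum_nonneg mult_nonneg_nonneg) (auto intro!: nonneg_matD)
qed

lemma nonneg_add: assumes "A \<in> carrier_mat r c" "B \<in> carrier_mat r c" "nonneg_mat A" "nonneg_mat B"
  shows "nonneg_mat (A + B)"
  using assms unfolding nonneg_mat_def by auto

lemma nonneg_smult: assumes "nonneg_mat A" "(a::real) \<ge> 0"
  shows "nonneg_mat (a \<cdot>\<^sub>m A)"
  using assms unfolding nonneg_mat_def by auto

lemma nonneg_zero: "nonneg_mat (0\<^sub>m r c)" by (intro nonneg_matI) auto
lemma nonneg_one: "nonneg_mat (1\<^sub>m n)" by (intro nonneg_matI) auto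

lemma le_matI: "A \<in> carrier_mat r c \<Longrightarrow> B \<in> carrier_mat r c \<Longrightarrow>
  (\<And>i j. i < r \<Longrightarrow> j < c \<Longrightarrow> A $$ (i,j) \<le> B $$ (i,j)) \<Longrightarrow> le_mat A B"
  unfolding le_mat_def by auto

lemma le_matD: "le_mat A B \<Longrightarrow> i < dim_row A \<Longrightarrow> j < dim_col A \<Longrightarrow> A $$ (i,j) \<le> B $$ (i,j)"
  unfolding le_mat_def by auto

lemma le_mat_antisym: "le_mat A B \<Longrightarrow> le_mat B A \<Longrightarrow> A = B"
  unfolding le_mat_def by (intro eq_matI) (auto intro: order.antisym)

lemma le_mat_trans: assumes "le_mat A B" "le_mat B C" shows "le_mat A C"
  unfolding le_mat_def
proof (intro conjI allI impI)
  fix i j assume "i < dim_row A" "j < dim_col A"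
  then show "A $$ (i,j) \<le> C $$ (i,j)" using assms unfolding le_mat_def by (metis order.trans)
qed (use assms in \<open>auto simp: le_mat_def\<close>)

lemma le_mat_refl: "le_mat A A"
  unfolding le_mat_def by auto

lemma le_mat_add: assumes "A \<in> carrier_mat r c" "B \<in> carrier_mat r c" "A' \<in> carrier_mat r c" "B' \<in> carrier_mat r c"
  "le_mat A A'" "le_mat B B'" shows "le_mat (A + B) (A' + B')"
  using assms unfolding le_mat_def by (auto intro: add_mono)

lemma le_mat_smult: assumes "le_mat A B" "(a::real) \<ge> 0" shows "le_mat (a \<cdot>\<^sub>m A) (a \<cdot>\<^sub>m B)"
  using assms unfolding le_mat_def by (auto intro: mult_left_mono)

lemma le_mat_mult: assumes c: "A \<in> carrier_mat r k" "B \<in> carrier_mat k c" "A' \<in> carrier_mat r k" "B' \<in> carrier_mat k c"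
  and n: "nonneg_mat A" "nonneg_mat B" and l: "le_mat A A'" "le_mat B B'"
  shows "le_mat (A * B) (A' * B')"
proof (rule le_matI[of _ r c])
  fix i j assume ij: "i < r" "j < c"
  show "(A * B) $$ (i,j) \<le> (A' * B') $$ (i,j)"
    unfolding mult_mat_sum[OF c(1,2) ij] mult_mat_sum[OF c(3,4) ij]
  proof (rule sum_mono)
    fix q assume q: "q \<in> {..<k}"
    show "A $$ (i,q) * B $$ (q,j) \<le> A' $$ (i,q) * B' $$ (q,j)"
      using c n ij q le_matD[OF l(1), of i q] le_matD[OF l(2), of q j] nonneg_matD[OF n(1), of i q] nonneg_matD[OF n(2), of q j]
      by (intro mult_mono) auto
  qed
qed (use c in auto)

lemma four_block_eq: assumes
  "a \<in> carrier_mat r1 c1" "b \<in> carrier_mat r1 c2" "c \<in> carrier_mat r2 c1" "d \<in> carrier_mat r2 c2"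
  "a' \<in> carrier_mat r1 c1" "b' \<in> carrier_mat r1 c2" "c' \<in> carrier_mat r2 c1" "d' \<in> carrier_mat r2 c2"
  and eq: "four_block_mat a b c d = four_block_mat a' b' c' d'"
  shows "a = a'" "b = b'" "c = c'" "d = d'"
proof -
  have e: "four_block_mat a b c d $$ (i,j) = four_block_mat a' b' c' d' $$ (i,j)" for i j using eq by simp
  show "a = a'"
  proof (rule eq_matI)
    fix i j assume "i < dim_row a'" "j < dim_col a'"
    then show "a $$ (i,j) = a' $$ (i,j)" using e[of i j] assms(1-8) by auto
  qed (use assms in auto)
  show "b = b'"
  proof (rule eq_matI)
    fix i j assume "i < dim_row b'" "j < dim_col b'"
    then show "b $$ (i,j) = b' $$ (i,j)" using e[of i "j + c1"] assms(1-8) by auto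
  qed (use assms in auto)
  show "c = c'"
  proof (rule eq_matI)
    fix i j assume "i < dim_row c'" "j < dim_col c'"
    then show "c $$ (i,j) = c' $$ (i,j)" using e[of "i + r1" j] assms(1-8) by auto
  qed (use assms in auto)
  show "d = d'"
  proof (rule eq_matI)
    fix i j assume "i < dim_row d'" "j < dim_col d'"
    then show "d $$ (i,j) = d' $$ (i,j)" using e[of "i + r1" "j + c1"] assms(1-8) by auto
  qed (use assms in auto)
qed

lemma four_block_le: assumes
  "a \<in> carrier_mat r1 c1" "b \<in> carrier_mat r1 c2" "c \<in> carrier_mat r2 c1" "d \<in> carrier_mat r2 c2"
  "a' \<in> carrier_mat r1 c1" "b' \<in> carrier_mat r1 c2" "c' \<in> carrier_mat r2 c1" "d' \<in> carrier_mat r2 c2"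
  shows "le_mat (four_block_mat a b c d) (four_block_mat a' b' c' d') \<longleftrightarrow>
     le_mat a a' \<and> le_mat b b' \<and> le_mat c c' \<and> le_mat d d'"
proof
  assume l: "le_mat (four_block_mat a b c d) (four_block_mat a' b' c' d')"
  have e: "i < r1 + r2 \<Longrightarrow> j < c1 + c2 \<Longrightarrow> four_block_mat a b c d $$ (i,j) \<le> four_block_mat a' b' c' d' $$ (i,j)" for i j
    using le_matD[OF l, of i j] assms by auto
  show "le_mat a a' \<and> le_mat b b' \<and> le_mat c c' \<and> le_mat d d'"
  proof (intro conjI)
    show "le_mat a a'"
    proof (rule le_matI[of _ r1 c1])
      fix i j assume "i < r1" "j < c1"
      then show "a $$ (i,j) \<le> a' $$ (i,j)" using e[of "i" "j"] assms(1-8) by simp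
    qed (use assms in auto)
    show "le_mat b b'"
    proof (rule le_matI[of _ r1 c2])
      fix i j assume "i < r1" "j < c2"
      then show "b $$ (i,j) \<le> b' $$ (i,j)" using e[of "i" "j + c1"] assms(1-8) by simp
    qed (use assms in auto)
    show "le_mat c c'"
    proof (rule le_matI[of _ r2 c1])
      fix i j assume "i < r2" "j < c1"
      then show "c $$ (i,j) \<le> c' $$ (i,j)" using e[of "i + r1" "j"] assms(1-8) by simp
    qed (use assms in auto)
    show "le_mat d d'"
    proof (rule le_matI[of _ r2 c2])
      fix i j assume "i < r2" "j < c2"
      then show "d $$ (i,j) \<le> d' $$ (i,j)" using e[of "i + r1" "j + c1"] assms(1-8) by simp
    qed (use assms in auto)
  qed
next
  assume "le_mat a a' \<and> le_mat b b' \<and> le_mat c c' \<and> le_mat d d'"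
  then show "le_mat (four_block_mat a b c d) (four_block_mat a' b' c' d')"
    using assms unfolding le_mat_def by auto
qed

lemma four_block_nonneg: assumes
  "a \<in> carrier_mat r1 c1" "b \<in> carrier_mat r1 c2" "c \<in> carrier_mat r2 c1" "d \<in> carrier_mat r2 c2"
  shows "nonneg_mat (four_block_mat a b c d) \<longleftrightarrow>
     nonneg_mat a \<and> nonneg_mat b \<and> nonneg_mat c \<and> nonneg_mat d"
proof
  assume l: "nonneg_mat (four_block_mat a b c d)"
  have e: "i < r1 + r2 \<Longrightarrow> j < c1 + c2 \<Longrightarrow> four_block_mat a b c d $$ (i,j) \<ge> 0" for i j
    using nonneg_matD[OF l, of i j] assms by auto
  show "nonneg_mat a \<and> nonneg_mat b \<and> nonneg_mat c \<and> nonneg_mat d"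
  proof (intro conjI)
    show "nonneg_mat a"
    proof (rule nonneg_matI)
      fix i j assume "i < dim_row a" "j < dim_col a"
      then have "i < r1" "j < c1" using assms by auto
      then show "a $$ (i,j) \<ge> 0" using e[of "i" "j"] assms(1-4) by simp
    qed
    show "nonneg_mat b"
    proof (rule nonneg_matI)
      fix i j assume "i < dim_row b" "j < dim_col b"
      then have "i < r1" "j < c2" using assms by auto
      then show "b $$ (i,j) \<ge> 0" using e[of "i" "j + c1"] assms(1-4) by simp
    qed
    show "nonneg_mat c"
    proof (rule nonneg_matI)
      fix i j assume "i < dim_row c" "j < dim_col c"
      then have "i < r2" "j < c1" using assms by auto
      then show "c $$ (i,j) \<ge> 0" using e[of "i + r1" "j"] assms(1-4) by simp
    qed
    show "nonneg_mat d"
    proof (rule nonneg_matI)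
      fix i j assume "i < dim_row d" "j < dim_col d"
      then have "i < r2" "j < c2" using assms by auto
      then show "d $$ (i,j) \<ge> 0" using e[of "i + r1" "j + c1"] assms(1-4) by simp
    qed
  qed
next
  assume "nonneg_mat a \<and> nonneg_mat b \<and> nonneg_mat c \<and> nonneg_mat d"
  then show "nonneg_mat (four_block_mat a b c d)"
    using assms unfolding nonneg_mat_def by auto
qed

lemma min_sol_le_super:
  fixes f :: "real mat \<Rightarrow> real mat"
  assumes sol: "min_nonneg_sol r c (\<lambda>X. f X = X) R"
    and fc: "\<And>X. X \<in> carrier_mat r c \<Longrightarrow> f X \<in> carrier_mat r c"
    and fn: "\<And>X. X \<in> carrier_mat r c \<Longrightarrow> nonneg_mat X \<Longrightarrow> nonneg_mat (f X)"
    and fm: "\<And>X Y. X \<in> carrier_mat r c \<Longrightarrow> Y \<in> carrier_mat r c \<Longrightarrow> nonneg_mat X \<Longrightarrow> le_mat X Y \<Longrightarrow> le_mat (f X) (f Y)"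
    and S: "S \<in> carrier_mat r c" "nonneg_mat S" "le_mat (f S) S"
  shows "le_mat R S"
proof -
  define Pre where "Pre = {X. X \<in> carrier_mat r c \<and> nonneg_mat X \<and> le_mat (f X) X}"
  define m where "m = mat r c (\<lambda>(i,j). Inf ((\<lambda>X. X $$ (i,j)) ` Pre))"
  have SP: "S \<in> Pre" using S unfolding Pre_def by auto
  have bdd: "bdd_below ((\<lambda>X. X $$ (i,j)) ` Pre)" if "i < r" "j < c" for i j
    by (rule bdd_belowI[of _ 0]) (use that in \<open>auto simp: Pre_def dest: nonneg_matD\<close>)
  have mc: "m \<in> carrier_mat r c" unfolding m_def by auto
  have mle: "le_mat m X" if "X \<in> Pre" for X
  proof (rule le_matI[OF mc])
    show "X \<in> carrier_mat r c" using that Pre_def by auto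
    fix i j assume ij: "i < r" "j < c"
    show "m $$ (i,j) \<le> X $$ (i,j)" unfolding m_def using ij that bdd[OF ij]
      by (auto intro: cInf_lower)
  qed
  have mn: "nonneg_mat m"
  proof (rule nonneg_matI)
    fix i j assume "i < dim_row m" "j < dim_col m"
    then have ij: "i < r" "j < c" using mc by auto
    show "m $$ (i,j) \<ge> 0" unfolding m_def using ij SP
      by (auto intro!: cINF_greatest simp: Pre_def dest: nonneg_matD)
  qed
  have fmle: "le_mat (f m) m"
  proof (rule le_matI[OF fc[OF mc] mc])
    fix i j assume ij: "i < r" "j < c"
    have "f m $$ (i,j) \<le> X $$ (i,j)" if X: "X \<in> Pre" for X
    proof -
      have "le_mat (f m) (f X)" using fm[OF mc _ mn mle[OF X]] X Pre_def by auto
      then have "le_mat (f m) X" using X Pre_def le_mat_trans by auto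
      then show ?thesis using ij fc[OF mc] by (auto dest: le_matD)
    qed
    then show "f m $$ (i,j) \<le> m $$ (i,j)" unfolding m_def using ij SP
      by (auto intro!: cINF_greatest)
  qed
  have "f m \<in> Pre" unfolding Pre_def
    using fc[OF mc] fn[OF mc mn] fm[OF fc[OF mc] mc fn[OF mc mn] fmle] by auto
  then have "le_mat m (f m)" by (rule mle)
  then have fx: "f m = m" using fmle le_mat_antisym by auto
  then have "le_mat R m" using sol mc mn unfolding min_nonneg_sol_def by auto
  then show ?thesis using mle[OF SP] le_mat_trans by auto
qed

lemma sum_split_add: "(\<Sum>j<a+b. f j) = (\<Sum>j<a. f j) + (\<Sum>j<b. f (j + a)) " for f :: "nat \<Rightarrow> real"
proof -
  have "{..<a+b} = {..<a} \<union> {a..<a+b}" by auto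
  then have "(\<Sum>j<a+b. f j) = (\<Sum>j<a. f j) + (\<Sum>j\<in>{a..<a+b}. f j)"
    by (metis sum.union_disjoint finite_lessThan finite_atLeastLessThan ivl_disj_int_one(2))
  also have "(\<Sum>j\<in>{a..<a+b}. f j) = (\<Sum>j<b. f (j + a))"
    by (rule sum.reindex_bij_witness[of _ "\<lambda>j. j + a" "\<lambda>j. j - a"]) auto
  finally show ?thesis .
qed

locale setup7 =
  fixes np nm :: nat and T Tpp Tpm Tmp Tmm Psi E G H F RD :: "real mat"
    and lam mu :: real
  assumes np: "np > 0" and nm: "nm > 0"
    and Tpp: "Tpp \<in> carrier_mat np np" and Tpm: "Tpm \<in> carrier_mat np nm"
    and Tmp: "Tmp \<in> carrier_mat nm np" and Tmm: "Tmm \<in> carrier_mat nm nm"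
    and T: "T = four_block_mat Tpp Tpm Tmp Tmm"
    and gen: "generator (np + nm) T"
    and Psi: "min_nonneg_sol np nm
                (\<lambda>X. Tpm + X * Tmm + Tpp * X + X * Tmp * X = 0\<^sub>m np nm) Psi"
    and lam0: "lam > 0" and lam1: "\<forall>i<np+nm. \<bar>T $$ (i,i)\<bar> \<le> lam"
    and mu0: "mu > 0" and mu1: "\<forall>i<np+nm. \<bar>T $$ (i,i)\<bar> \<le> mu"
    and EGHF: "four_block_mat E G H F =
       minv (four_block_mat (1\<^sub>m np - (1/mu) \<cdot>\<^sub>m Tpp) (- ((1/lam) \<cdot>\<^sub>m Tpm))
                            (- ((1/mu) \<cdot>\<^sub>m Tmp)) (1\<^sub>m nm - (1/lam) \<cdot>\<^sub>m Tmm))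
       * four_block_mat (1\<^sub>m np + (1/lam) \<cdot>\<^sub>m Tpp) ((1/mu) \<cdot>\<^sub>m Tpm)
                        ((1/lam) \<cdot>\<^sub>m Tmp) (1\<^sub>m nm + (1/mu) \<cdot>\<^sub>m Tmm)"
    and E: "E \<in> carrier_mat np np" and G: "G \<in> carrier_mat np nm"
    and H: "H \<in> carrier_mat nm np" and F: "F \<in> carrier_mat nm nm"
    and RD: "min_nonneg_sol (np + nm) (np + nm)
       (\<lambda>R. R * R * four_block_mat (0\<^sub>m np np) (0\<^sub>m np nm) (0\<^sub>m nm np) F
            + R * four_block_mat (0\<^sub>m np np) G H (0\<^sub>m nm nm)
            + four_block_mat E (0\<^sub>m np nm) (0\<^sub>m nm np) (0\<^sub>m nm nm) = R) RD"
begin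

abbreviation "n \<equiv> np + nm"

definition "Am = four_block_mat (1\<^sub>m np - (1/mu) \<cdot>\<^sub>m Tpp) (- ((1/lam) \<cdot>\<^sub>m Tpm))
                            (- ((1/mu) \<cdot>\<^sub>m Tmp)) (1\<^sub>m nm - (1/lam) \<cdot>\<^sub>m Tmm)"
definition "Bm = four_block_mat (1\<^sub>m np + (1/lam) \<cdot>\<^sub>m Tpp) ((1/mu) \<cdot>\<^sub>m Tpm)
                        ((1/lam) \<cdot>\<^sub>m Tmp) (1\<^sub>m nm + (1/mu) \<cdot>\<^sub>m Tmm)"
definition "cc j = (if j < np then 1/mu else 1/lam)"
definition "dd j = (if j < np then 1/lam else 1/mu)"

lemma Tc: "T \<in> carrier_mat n n" using T Tpp Tmm by simp

lemma Tent: "i < n \<Longrightarrow> j < n \<Longrightarrow> T $$ (i,j) = (if i < np then if j < np then Tpp $$ (i,j) else Tpm $$ (i,j-np)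
      else if j < np then Tmp $$ (i-np,j) else Tmm $$ (i-np,j-np))"
  using Tpp Tpm Tmp Tmm unfolding T by simp

lemma Tpp_ent: "i < np \<Longrightarrow> j < np \<Longrightarrow> Tpp $$ (i,j) = T $$ (i,j)" using Tent by simp
lemma Tpm_ent: "i < np \<Longrightarrow> j < nm \<Longrightarrow> Tpm $$ (i,j) = T $$ (i,j+np)" using Tent by simp
lemma Tmp_ent: "i < nm \<Longrightarrow> j < np \<Longrightarrow> Tmp $$ (i,j) = T $$ (i+np,j)" using Tent by simp
lemma Tmm_ent: "i < nm \<Longrightarrow> j < nm \<Longrightarrow> Tmm $$ (i,j) = T $$ (i+np,j+np)" using Tent by simp

lemma T_off: "i < n \<Longrightarrow> j < n \<Longrightarrow> i \<noteq> j \<Longrightarrow> T $$ (i,j) \<ge> 0"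
  using gen unfolding generator_def by auto

lemma T_row: "i < n \<Longrightarrow> (\<Sum>j<n. T $$ (i,j)) = 0"
  using gen unfolding generator_def by auto

lemma T_diag: "i < n \<Longrightarrow> T $$ (i,i) \<le> 0"
proof -
  assume i: "i < n"
  have "0 = (\<Sum>j<n. T $$ (i,j))" using T_row[OF i] by simp
  also have "\<dots> = T $$ (i,i) + (\<Sum>j\<in>{..<n}-{i}. T $$ (i,j))"
    using i by (simp add: sum.remove)
  finally have "T $$ (i,i) = - (\<Sum>j\<in>{..<n}-{i}. T $$ (i,j))" by simp
  moreover have "(\<Sum>j\<in>{..<n}-{i}. T $$ (i,j)) \<ge> 0" using T_off i by (intro sum_nonneg) auto
  ultimately show ?thesis by simp
qed

lemma T_off_sum: "i < n \<Longrightarrow> (\<Sum>j\<in>{..<n}-{i}. T $$ (i,j)) = - T $$ (i,i)"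
proof -
  assume i: "i < n"
  have "0 = (\<Sum>j<n. T $$ (i,j))" using T_row[OF i] by simp
  also have "\<dots> = T $$ (i,i) + (\<Sum>j\<in>{..<n}-{i}. T $$ (i,j))"
    using i by (simp add: sum.remove)
  finally show ?thesis by simp
qed

lemma Tpm_nn: "nonneg_mat Tpm"
  using Tpm by (intro nonneg_matI) (auto simp: Tpm_ent intro!: T_off)
lemma Tmp_nn: "nonneg_mat Tmp"
  using Tmp by (intro nonneg_matI) (auto simp: Tmp_ent intro!: T_off)
lemma Tpp_off: "i < np \<Longrightarrow> j < np \<Longrightarrow> i \<noteq> j \<Longrightarrow> Tpp $$ (i,j) \<ge> 0"
  by (auto simp: Tpp_ent intro!: T_off)
lemma Tmm_off: "i < nm \<Longrightarrow> j < nm \<Longrightarrow> i \<noteq> j \<Longrightarrow> Tmm $$ (i,j) \<ge> 0"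
  by (auto simp: Tmm_ent intro!: T_off)
lemma Tpp_diag: "i < np \<Longrightarrow> Tpp $$ (i,i) \<ge> - lam \<and> Tpp $$ (i,i) \<ge> - mu \<and> Tpp $$ (i,i) \<le> 0"
  using lam1[rule_format, of i] mu1[rule_format, of i] T_diag[of i] by (auto simp: Tpp_ent)
lemma Tmm_diag: "i < nm \<Longrightarrow> Tmm $$ (i,i) \<ge> - lam \<and> Tmm $$ (i,i) \<ge> - mu \<and> Tmm $$ (i,i) \<le> 0"
  using lam1[rule_format, of "i+np"] mu1[rule_format, of "i+np"] T_diag[of "i+np"] by (auto simp: Tmm_ent)

lemma rowsum_p: "i < np \<Longrightarrow> (\<Sum>j<np. Tpp $$ (i,j)) + (\<Sum>j<nm. Tpm $$ (i,j)) = 0"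
  using T_row[of i] by (simp add: sum_split_add Tpp_ent Tpm_ent)
lemma rowsum_m: "i < nm \<Longrightarrow> (\<Sum>j<np. Tmp $$ (i,j)) + (\<Sum>j<nm. Tmm $$ (i,j)) = 0"
  using T_row[of "i+np"] by (simp add: sum_split_add Tmp_ent Tmm_ent)

lemma Am_c: "Am \<in> carrier_mat n n" unfolding Am_def carrier_mat_def using Tpp Tmm by auto
lemma Bm_c: "Bm \<in> carrier_mat n n" unfolding Bm_def carrier_mat_def using Tpp Tmm by auto

lemma Am_ent: "i < n \<Longrightarrow> j < n \<Longrightarrow> Am $$ (i,j) = (if i = j then 1 else 0) - T $$ (i,j) * cc j"
  unfolding Am_def cc_def using Tpp Tpm Tmp Tmm by (auto simp: Tent)

lemma Bm_ent: "i < n \<Longrightarrow> j < n \<Longrightarrow> Bm $$ (i,j) = (if i = j then 1 else 0) + T $$ (i,j) * dd j"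
  unfolding Bm_def dd_def using Tpp Tpm Tmp Tmm by (auto simp: Tent)

end

definition ones :: "nat \<Rightarrow> real vec" where "ones k = vec k (\<lambda>_. 1)"

lemma ones_c[simp]: "ones k \<in> carrier_vec k" unfolding ones_def by simp
lemma ones_idx[simp]: "i < k \<Longrightarrow> ones k $ i = 1" unfolding ones_def by simp

lemma mult_ones: assumes "A \<in> carrier_mat r c" "i < r" shows "(A *\<^sub>v ones c) $ i = (\<Sum>j<c. A $$ (i,j))"
proof -
  have "(A *\<^sub>v ones c) $ i = (\<Sum>j<c. A $$ (i,j) * ones c $ j)" by (rule mult_vec_sum[OF assms(1) _ assms(2)]) auto
  then show ?thesis by simp
qed

context setup7 begin

lemma cc_pos: "cc j > 0" unfolding cc_def using lam0 mu0 by auto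
lemma cc_le: "cc j \<le> 1 / min lam mu" unfolding cc_def using lam0 mu0
  by (auto simp: frac_le min_def)

lemma Am_rowpos: "i < n \<Longrightarrow> (Am *\<^sub>v ones n) $ i > 0"
proof -
  assume i: "i < n"
  define m0 where "m0 = min lam mu"
  have m0: "m0 > 0" using lam0 mu0 m0_def by auto
  define d where "d = - T $$ (i,i)"
  have d0: "d \<ge> 0" using T_diag[OF i] d_def by simp
  have dm: "d \<le> m0" using lam1 mu1 i d_def d0 m0_def by auto
  have "(Am *\<^sub>v ones n) $ i = (\<Sum>j<n. Am $$ (i,j))" using mult_ones[OF Am_c i] .
  also have "\<dots> = (\<Sum>j<n. (if i = j then 1 else 0) - T $$ (i,j) * cc j)"
    using i by (intro sum.cong) (auto simp: Am_ent)
  also have "\<dots> = 1 - (\<Sum>j<n. T $$ (i,j) * cc j)" using i by (simp add: sum_subtractf)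
  finally have eq: "(Am *\<^sub>v ones n) $ i = 1 - (\<Sum>j<n. T $$ (i,j) * cc j)" .
  have "(\<Sum>j<n. T $$ (i,j) * cc j) = T $$ (i,i) * cc i + (\<Sum>j\<in>{..<n}-{i}. T $$ (i,j) * cc j)"
    using i by (simp add: sum.remove)
  also have "(\<Sum>j\<in>{..<n}-{i}. T $$ (i,j) * cc j) \<le> (\<Sum>j\<in>{..<n}-{i}. T $$ (i,j) * (1/m0))"
    using i T_off cc_le unfolding m0_def by (intro sum_mono mult_left_mono) auto
  also have "\<dots> = (\<Sum>j\<in>{..<n}-{i}. T $$ (i,j)) / m0" by (simp add: sum_divide_distrib)
  also have "\<dots> = d / m0" using T_off_sum[OF i] d_def by simp
  finally have le: "(\<Sum>j<n. T $$ (i,j) * cc j) \<le> - d * cc i + d / m0" using d_def by simp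
  have "d / m0 \<le> 1" using dm m0 by simp
  show ?thesis
  proof (cases "d = 0")
    case True then show ?thesis using eq le by (simp add: True)
  next
    case False
    then have "d * cc i > 0" using d0 cc_pos by simp
    then show ?thesis using eq le \<open>d / m0 \<le> 1\<close> by linarith
  qed
qed

lemma Am_off: "\<forall>i<n. \<forall>j<n. i \<noteq> j \<longrightarrow> Am $$ (i,j) \<le> 0"
proof (intro allI impI)
  fix i j assume ij: "i < n" "j < n" "i \<noteq> j"
  have "T $$ (i,j) * cc j \<ge> 0" using T_off[OF ij] cc_pos[of j] by simp
  then show "Am $$ (i,j) \<le> 0" using ij by (simp add: Am_ent)
qed

definition "Q = minv Am"
definition "N = Q * Bm"

lemma Q_props: "invertible_mat Am" "Q \<in> carrier_mat n n" "Am * Q = 1\<^sub>m n" "Q * Am = 1\<^sub>m n" "nonneg_mat Q"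
  using zmat_inv[OF Am_c Am_off ones_c[of n]] Am_rowpos unfolding Q_def by auto

lemma Bm_nn: "nonneg_mat Bm"
proof (rule nonneg_matI)
  fix i j assume "i < dim_row Bm" "j < dim_col Bm"
  then have ij: "i < n" "j < n" using Bm_c by auto
  show "Bm $$ (i,j) \<ge> 0"
  proof (cases "i = j")
    case True
    have "T $$ (i,i) * dd i \<ge> -1"
    proof (cases "i < np")
      case True then show ?thesis using lam1[rule_format, of i] lam0 ij T_diag[of i] unfolding dd_def
        by (auto simp: field_simps)
    next
      case False then show ?thesis using mu1[rule_format, of i] mu0 ij T_diag[of i] unfolding dd_def
        by (auto simp: field_simps)
    qed
    then show ?thesis using True ij by (simp add: Bm_ent)
  next
    case False
    have "dd j > 0" unfolding dd_def using lam0 mu0 by auto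
    then show ?thesis using False ij T_off[of i j] by (simp add: Bm_ent)
  qed
qed

lemma N_c: "N \<in> carrier_mat n n" unfolding N_def using Q_props Bm_c by auto
lemma N_nn: "nonneg_mat N" unfolding N_def using nonneg_mult[OF Q_props(2) Bm_c Q_props(5) Bm_nn] .
lemma AN: "Am * N = Bm"
proof -
  have "Am * N = (Am * Q) * Bm" unfolding N_def by (rule assoc_mult_mat[symmetric, OF Am_c Q_props(2) Bm_c])
  also have "\<dots> = Bm" using Q_props Bm_c by simp
  finally show ?thesis .
qed

lemma EGHF_N: "four_block_mat E G H F = N" using EGHF unfolding N_def Q_def Am_def Bm_def .

lemma EGHF_nn: "nonneg_mat E" "nonneg_mat G" "nonneg_mat H" "nonneg_mat F"
  using four_block_nonneg[OF E G H F] N_nn EGHF_N by auto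

end

context setup7 begin

definition "Dm = four_block_mat (0\<^sub>m np np) (0\<^sub>m np nm) (0\<^sub>m nm np) F"
definition "D0 = four_block_mat (0\<^sub>m np np) G H (0\<^sub>m nm nm)"
definition "D1 = four_block_mat E (0\<^sub>m np nm) (0\<^sub>m nm np) (0\<^sub>m nm nm)"
definition "fD R = R * R * Dm + R * D0 + D1"

lemma Dm_c: "Dm \<in> carrier_mat n n" unfolding Dm_def using F by simp
lemma D0_c: "D0 \<in> carrier_mat n n" unfolding D0_def by simp
lemma D1_c: "D1 \<in> carrier_mat n n" unfolding D1_def using E by simp

lemma RD': "min_nonneg_sol n n (\<lambda>R. fD R = R) RD"
  using RD unfolding fD_def Dm_def D0_def D1_def .

lemma fD_block:
  assumes a: "a \<in> carrier_mat np np" and b: "b \<in> carrier_mat np nm"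
    and c: "c \<in> carrier_mat nm np" and d: "d \<in> carrier_mat nm nm"
  shows "fD (four_block_mat a b c d) = four_block_mat (b * H + E) ((a * b + b * d) * F + a * G)
      (d * H) ((c * b + d * d) * F + c * G)"
proof -
  let ?S = "four_block_mat a b c d"
  have SS: "?S * ?S = four_block_mat (a*a+b*c) (a*b+b*d) (c*a+d*c) (c*b+d*d)"
    by (rule mult_four_block_mat[OF a b c d a b c d])
  have c1: "a*a+b*c \<in> carrier_mat np np" "a*b+b*d \<in> carrier_mat np nm"
    "c*a+d*c \<in> carrier_mat nm np" "c*b+d*d \<in> carrier_mat nm nm" using a b c d by auto
  have SSD: "?S * ?S * Dm = four_block_mat (0\<^sub>m np np) ((a*b+b*d) * F) (0\<^sub>m nm np) ((c*b+d*d) * F)"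
    unfolding SS Dm_def
    by (subst mult_four_block_mat[OF c1 zero_carrier_mat zero_carrier_mat zero_carrier_mat F])
       (use c1 F a b c d mult_carrier_mat[OF c1(2) F] mult_carrier_mat[OF c1(4) F] in simp)
  have SD0: "?S * D0 = four_block_mat (b * H) (a * G) (d * H) (c * G)"
    unfolding D0_def
    by (subst mult_four_block_mat[OF a b c d zero_carrier_mat G H zero_carrier_mat])
       (use a b c d G H mult_carrier_mat[OF b H] mult_carrier_mat[OF a G] mult_carrier_mat[OF d H] mult_carrier_mat[OF c G] in simp)
  show ?thesis unfolding fD_def SSD SD0 D1_def
    apply (subst add_four_block_mat[of _ np np _ nm _ nm])
    using a b c d E F G H apply auto[8]
    apply (subst add_four_block_mat[of _ np np _ nm _ nm])
    using a b c d E F G H apply auto[8]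
    using a b c d E F G H by (simp add: comm_add_mat[of E])
qed

end

context setup7 begin

lemma D_nn: "nonneg_mat Dm" "nonneg_mat D0" "nonneg_mat D1"
  unfolding Dm_def D0_def D1_def
  using EGHF_nn E F G H nonneg_zero
  by (auto simp: four_block_nonneg[of _ np np _ nm _ nm])

lemma fD_c: "R \<in> carrier_mat n n \<Longrightarrow> fD R \<in> carrier_mat n n"
  unfolding fD_def using Dm_c D0_c D1_c by auto

lemma fD_nn: "R \<in> carrier_mat n n \<Longrightarrow> nonneg_mat R \<Longrightarrow> nonneg_mat (fD R)"
  unfolding fD_def using Dm_c D0_c D1_c D_nn
  by (meson add_carrier_mat mult_carrier_mat nonneg_add nonneg_mult)

lemma fD_mono: assumes "R \<in> carrier_mat n n" "S \<in> carrier_mat n n" "nonneg_mat R" "le_mat R S"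
  shows "le_mat (fD R) (fD S)"
proof -
  have RR: "le_mat (R * R) (S * S)" by (rule le_mat_mult[OF assms(1,1,2,2,3,3,4,4)])
  have 1: "le_mat (R * R * Dm) (S * S * Dm)"
    by (rule le_mat_mult[of _ n n _ n]) (use assms Dm_c D_nn RR nonneg_mult le_mat_refl in auto)
  have 2: "le_mat (R * D0) (S * D0)"
    by (rule le_mat_mult[of _ n n _ n]) (use assms D0_c D_nn le_mat_refl in auto)
  show ?thesis unfolding fD_def
    by (rule le_mat_add[of _ n n]) (use assms 1 2 Dm_c D0_c D1_c le_mat_refl in \<open>auto intro!: le_mat_add[of _ n n]\<close>)
qed

lemma RD_le_super: "S \<in> carrier_mat n n \<Longrightarrow> nonneg_mat S \<Longrightarrow> le_mat (fD S) S \<Longrightarrow> le_mat RD S"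
  by (rule min_sol_le_super[OF RD' fD_c fD_nn fD_mono])

lemma RD_c: "RD \<in> carrier_mat n n" "nonneg_mat RD" "fD RD = RD"
  using RD' unfolding min_nonneg_sol_def by auto

definition "Xr = fst (split_block RD np np)"
definition "Yr = fst (snd (split_block RD np np))"
definition "Zr = fst (snd (snd (split_block RD np np)))"
definition "Wr = snd (snd (snd (split_block RD np np)))"

lemma RD_split: "Xr \<in> carrier_mat np np" "Yr \<in> carrier_mat np nm" "Zr \<in> carrier_mat nm np"
  "Wr \<in> carrier_mat nm nm" "RD = four_block_mat Xr Yr Zr Wr"
proof -
  have sb: "split_block RD np np = (Xr, Yr, Zr, Wr)" unfolding Xr_def Yr_def Zr_def Wr_def by simp
  note s = split_block[OF sb, of nm nm]
  show "Xr \<in> carrier_mat np np" "Yr \<in> carrier_mat np nm" "Zr \<in> carrier_mat nm np"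
    "Wr \<in> carrier_mat nm nm" "RD = four_block_mat Xr Yr Zr Wr" using s RD_c by auto
qed

lemma XYZW_nn: "nonneg_mat Xr" "nonneg_mat Yr" "nonneg_mat Zr" "nonneg_mat Wr"
  using four_block_nonneg[OF RD_split(1-4)] RD_c(2) RD_split(5) by auto

lemma RD_eqs: "Xr = Yr * H + E" "Yr = (Xr * Yr + Yr * Wr) * F + Xr * G"
  "Zr = Wr * H" "Wr = (Zr * Yr + Wr * Wr) * F + Zr * G"
proof -
  note c = RD_split(1-4)
  have "four_block_mat (Yr * H + E) ((Xr * Yr + Yr * Wr) * F + Xr * G) (Wr * H) ((Zr * Yr + Wr * Wr) * F + Zr * G)
     = four_block_mat Xr Yr Zr Wr"
    using RD_c(3) fD_block[OF c] RD_split(5) by simp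
  note e = four_block_eq[OF _ _ _ _ c this]
  show "Xr = Yr * H + E" "Yr = (Xr * Yr + Yr * Wr) * F + Xr * G"
    "Zr = Wr * H" "Wr = (Zr * Yr + Wr * Wr) * F + Zr * G"
    using e c E F G H by (auto simp del: assoc_mult_mat)
qed

lemma ZW_zero: "Zr = 0\<^sub>m nm np" "Wr = 0\<^sub>m nm nm"
proof -
  note c = RD_split(1-4)
  let ?S = "four_block_mat Xr Yr (0\<^sub>m nm np) (0\<^sub>m nm nm)"
  have Sc: "?S \<in> carrier_mat n n" using c by simp
  have Sn: "nonneg_mat ?S" using c XYZW_nn nonneg_zero four_block_nonneg[of Xr np np Yr nm "0\<^sub>m nm np" nm "0\<^sub>m nm nm"] by auto
  have fS: "fD ?S = four_block_mat (Yr * H + E) ((Xr * Yr + Yr * 0\<^sub>m nm nm) * F + Xr * G)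
      (0\<^sub>m nm nm * H) ((0\<^sub>m nm np * Yr + 0\<^sub>m nm nm * 0\<^sub>m nm nm) * F + 0\<^sub>m nm np * G)"
    by (rule fD_block) (use c in auto)
  have z1: "0\<^sub>m nm nm * H = 0\<^sub>m nm np" using H by simp
  have z2: "(0\<^sub>m nm np * Yr + 0\<^sub>m nm nm * 0\<^sub>m nm nm) * F + 0\<^sub>m nm np * G = 0\<^sub>m nm nm"
    using c F G by simp
  have l2: "le_mat ((Xr * Yr + Yr * 0\<^sub>m nm nm) * F + Xr * G) Yr"
  proof -
    have a: "le_mat (Yr * 0\<^sub>m nm nm) (Yr * Wr)"
      by (rule le_mat_mult[of _ np nm _ nm]) (use c XYZW_nn nonneg_zero le_mat_refl in \<open>auto intro!: le_matI[of _ nm nm] simp: nonneg_mat_def\<close>)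
    have b: "le_mat (Xr * Yr + Yr * 0\<^sub>m nm nm) (Xr * Yr + Yr * Wr)"
      by (rule le_mat_add[of _ np nm]) (use c a le_mat_refl in auto)
    have bn: "nonneg_mat (Xr * Yr + Yr * 0\<^sub>m nm nm)"
      by (rule nonneg_add[of _ np nm]) (use c XYZW_nn nonneg_zero nonneg_mult in auto)
    have d: "le_mat ((Xr * Yr + Yr * 0\<^sub>m nm nm) * F) ((Xr * Yr + Yr * Wr) * F)"
      by (rule le_mat_mult[of _ np nm _ nm]) (use c b bn F EGHF_nn le_mat_refl in auto)
    have "le_mat ((Xr * Yr + Yr * 0\<^sub>m nm nm) * F + Xr * G) ((Xr * Yr + Yr * Wr) * F + Xr * G)"
      by (rule le_mat_add[of _ np nm]) (use c d F G le_mat_refl in auto)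
    then show ?thesis using RD_eqs(2) by simp
  qed
  have "le_mat (fD ?S) ?S" unfolding fS z1 z2
    by (subst four_block_le[of _ np np _ nm _ nm]) (use c E H F G l2 RD_eqs(1) le_mat_refl in auto)
  then have "le_mat RD ?S" using RD_le_super Sc Sn by auto
  then have l: "le_mat Zr (0\<^sub>m nm np)" "le_mat Wr (0\<^sub>m nm nm)"
    using four_block_le[OF c, of Xr Yr "0\<^sub>m nm np" "0\<^sub>m nm nm"] RD_split(5) c by auto
  show "Zr = 0\<^sub>m nm np"
    by (rule le_mat_antisym[OF l(1)]) (use c XYZW_nn in \<open>auto simp: le_mat_def nonneg_mat_def\<close>)
  show "Wr = 0\<^sub>m nm nm"
    by (rule le_mat_antisym[OF l(2)]) (use c XYZW_nn in \<open>auto simp: le_mat_def nonneg_mat_def\<close>)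
qed

lemma RD_form: "RD = four_block_mat Xr Yr (0\<^sub>m nm np) (0\<^sub>m nm nm)"
  using RD_split(5) ZW_zero by simp

lemma Y_eq: "Yr = Xr * Yr * F + Xr * G"
  using RD_eqs(2) ZW_zero RD_split(1,2) by simp

end

lemma mult_1ms: assumes A: "(A::real mat) \<in> carrier_mat r k" and B: "B \<in> carrier_mat k k"
  shows "A * (1\<^sub>m k - s \<cdot>\<^sub>m B) = A - s \<cdot>\<^sub>m (A * B)"
proof -
  have "A * (1\<^sub>m k - s \<cdot>\<^sub>m B) = A * 1\<^sub>m k - A * (s \<cdot>\<^sub>m B)"
    by (rule mult_minus_distrib_mat[OF A]) (use B in auto)
  also have "\<dots> = A - s \<cdot>\<^sub>m (A * B)" using A B by (simp add: mult_smult_distrib[OF A B])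
  finally show ?thesis .
qed

lemma mult_1ps: assumes A: "(A::real mat) \<in> carrier_mat r k" and B: "B \<in> carrier_mat k k"
  shows "A * (1\<^sub>m k + s \<cdot>\<^sub>m B) = A + s \<cdot>\<^sub>m (A * B)"
proof -
  have "A * (1\<^sub>m k + s \<cdot>\<^sub>m B) = A * 1\<^sub>m k + A * (s \<cdot>\<^sub>m B)"
    by (rule mult_add_distrib_mat[OF A]) (use B in auto)
  also have "\<dots> = A + s \<cdot>\<^sub>m (A * B)" using A B by (simp add: mult_smult_distrib[OF A B])
  finally show ?thesis .
qed

lemma mult_s: assumes "(A::real mat) \<in> carrier_mat r k" "B \<in> carrier_mat k c"
  shows "A * (s \<cdot>\<^sub>m B) = s \<cdot>\<^sub>m (A * B)"
  using assms by (simp add: mult_smult_distrib)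

lemma mult_ms: assumes "(A::real mat) \<in> carrier_mat r k" "B \<in> carrier_mat k c"
  shows "A * (- (s \<cdot>\<^sub>m B)) = - (s \<cdot>\<^sub>m (A * B))"
  using assms by (simp add: mult_smult_distrib)

lemma solve2: fixes u p q d x a b :: real
  assumes "u - a*p - a*q = d" "u + b*p + b*q = x" "a + b \<noteq> 0"
  shows "u = d + a/(a+b) * (x - d)" "p + q = 1/(a+b) * (x - d)"
proof -
  have "a*p + a*q + b*p + b*q = x - d" using assms by linarith
  then have "(a+b)*(p+q) = x - d" by (simp add: algebra_simps)
  then have pq: "p + q = (x - d)/(a+b)" using assms(3) by (simp add: field_simps)
  then show "p + q = 1/(a+b) * (x - d)" by simp
  have "u = d + a*(p+q)" using assms(1) by (simp add: algebra_simps)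
  then show "u = d + a/(a+b) * (x - d)" using pq by simp
qed

lemma solve2': fixes u p q y f a b :: real
  assumes "- (b*p) + (u - b*q) = y" "a*p + (u + a*q) = f" "a + b \<noteq> 0"
  shows "u = f - a/(a+b) * (f - y)" "p + q = 1/(a+b) * (f - y)"
proof -
  have "a*p + a*q + b*p + b*q = f - y" using assms by linarith
  then have "(a+b)*(p+q) = f - y" by (simp add: algebra_simps)
  then have pq: "p + q = (f - y)/(a+b)" using assms(3) by (simp add: field_simps)
  then show "p + q = 1/(a+b) * (f - y)" by simp
  have "u = f - a*(p+q)" using assms(2) by (simp add: algebra_simps)
  then show "u = f - a/(a+b) * (f - y)" using pq by simp
qed

context setup7 begin

definition "Phi_r = G + Yr * F"
definition "Lm = four_block_mat (1\<^sub>m np) Yr (0\<^sub>m nm np) (0\<^sub>m nm nm)"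
definition "Um = Lm * Q"

lemmas XYc = RD_split(1,2)

lemma Phi_c: "Phi_r \<in> carrier_mat np nm" unfolding Phi_r_def using G XYc F by auto
lemma Phi_nn: "nonneg_mat Phi_r" unfolding Phi_r_def
  using nonneg_add[OF G _ EGHF_nn(2) nonneg_mult[OF XYc(2) F XYZW_nn(2) EGHF_nn(4)]] XYc F by auto

lemma Y_XPhi: "Yr = Xr * Phi_r"
proof -
  have "Xr * Phi_r = Xr * G + Xr * (Yr * F)" unfolding Phi_r_def
    by (rule mult_add_distrib_mat[OF XYc(1) G]) (use XYc F in auto)
  also have "Xr * (Yr * F) = Xr * Yr * F" by (rule assoc_mult_mat[symmetric, OF XYc(1,2) F])
  also have "Xr * G + Xr * Yr * F = Xr * Yr * F + Xr * G"
    by (rule comm_add_mat[of _ np nm]) (use XYc F G in auto)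
  finally show ?thesis using Y_eq by simp
qed

lemma Lm_c: "Lm \<in> carrier_mat n n" unfolding Lm_def by simp
lemma Lm_nn: "nonneg_mat Lm" unfolding Lm_def
  using four_block_nonneg[of "1\<^sub>m np" np np Yr nm "0\<^sub>m nm np" nm "0\<^sub>m nm nm"] XYc XYZW_nn nonneg_one nonneg_zero
  by auto

lemma LN: "Lm * N = four_block_mat Xr Phi_r (0\<^sub>m nm np) (0\<^sub>m nm nm)"
proof -
  have "Lm * N = four_block_mat (1\<^sub>m np * E + Yr * H) (1\<^sub>m np * G + Yr * F)
      (0\<^sub>m nm np * E + 0\<^sub>m nm nm * H) (0\<^sub>m nm np * G + 0\<^sub>m nm nm * F)"
    unfolding Lm_def EGHF_N[symmetric]
    by (rule mult_four_block_mat[OF one_carrier_mat XYc(2) zero_carrier_mat zero_carrier_mat E G H F])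
  also have "\<dots> = four_block_mat Xr Phi_r (0\<^sub>m nm np) (0\<^sub>m nm nm)"
  proof (rule cong_four_block_mat)
    show "1\<^sub>m np * E + Yr * H = Xr" using RD_eqs(1) E H XYc
      by (simp add: comm_add_mat[of E np np])
    show "1\<^sub>m np * G + Yr * F = Phi_r" unfolding Phi_r_def using G by simp
    show "0\<^sub>m nm np * E + 0\<^sub>m nm nm * H = 0\<^sub>m nm np" using E H by simp
    show "0\<^sub>m nm np * G + 0\<^sub>m nm nm * F = 0\<^sub>m nm nm" using G F by simp
  qed
  finally show ?thesis .
qed

lemma Um_c: "Um \<in> carrier_mat n n" unfolding Um_def using Lm_c Q_props by auto
lemma Um_nn: "nonneg_mat Um" unfolding Um_def using nonneg_mult[OF Lm_c Q_props(2) Lm_nn Q_props(5)] .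
lemma UA: "Um * Am = Lm"
proof -
  have "Um * Am = Lm * (Q * Am)" unfolding Um_def by (rule assoc_mult_mat[OF Lm_c Q_props(2) Am_c])
  then show ?thesis using Q_props Lm_c by simp
qed
lemma UB: "Um * Bm = four_block_mat Xr Phi_r (0\<^sub>m nm np) (0\<^sub>m nm nm)"
proof -
  have "Um * Bm = Lm * N" unfolding Um_def N_def by (rule assoc_mult_mat[OF Lm_c Q_props(2) Bm_c])
  then show ?thesis using LN by simp
qed

definition "U1 = fst (split_block Um np np)"
definition "U2 = fst (snd (split_block Um np np))"
definition "U3 = fst (snd (snd (split_block Um np np)))"
definition "U4 = snd (snd (snd (split_block Um np np)))"

lemma U_split: "U1 \<in> carrier_mat np np" "U2 \<in> carrier_mat np nm" "U3 \<in> carrier_mat nm np"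
  "U4 \<in> carrier_mat nm nm" "Um = four_block_mat U1 U2 U3 U4"
proof -
  have sb: "split_block Um np np = (U1, U2, U3, U4)" unfolding U1_def U2_def U3_def U4_def by simp
  note s = split_block[OF sb, of nm nm]
  show "U1 \<in> carrier_mat np np" "U2 \<in> carrier_mat np nm" "U3 \<in> carrier_mat nm np"
    "U4 \<in> carrier_mat nm nm" "Um = four_block_mat U1 U2 U3 U4" using s Um_c by auto
qed

lemma U1_nn: "nonneg_mat U1" using four_block_nonneg[OF U_split(1-4)] Um_nn U_split(5) by auto

abbreviation "aa \<equiv> 1 / mu"
abbreviation "bb \<equiv> 1 / lam"

lemma blocks_c: "1\<^sub>m np - aa \<cdot>\<^sub>m Tpp \<in> carrier_mat np np" "- (bb \<cdot>\<^sub>m Tpm) \<in> carrier_mat np nm"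
  "- (aa \<cdot>\<^sub>m Tmp) \<in> carrier_mat nm np" "1\<^sub>m nm - bb \<cdot>\<^sub>m Tmm \<in> carrier_mat nm nm"
  "1\<^sub>m np + bb \<cdot>\<^sub>m Tpp \<in> carrier_mat np np" "aa \<cdot>\<^sub>m Tpm \<in> carrier_mat np nm"
  "bb \<cdot>\<^sub>m Tmp \<in> carrier_mat nm np" "1\<^sub>m nm + aa \<cdot>\<^sub>m Tmm \<in> carrier_mat nm nm"
  using Tpp Tpm Tmp Tmm by auto

lemma eqs_abcd:
  "U1 - aa \<cdot>\<^sub>m (U1 * Tpp) + - (aa \<cdot>\<^sub>m (U2 * Tmp)) = 1\<^sub>m np"
  "- (bb \<cdot>\<^sub>m (U1 * Tpm)) + (U2 - bb \<cdot>\<^sub>m (U2 * Tmm)) = Yr"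
  "U1 + bb \<cdot>\<^sub>m (U1 * Tpp) + bb \<cdot>\<^sub>m (U2 * Tmp) = Xr"
  "aa \<cdot>\<^sub>m (U1 * Tpm) + (U2 + aa \<cdot>\<^sub>m (U2 * Tmm)) = Phi_r"
proof -
  note u = U_split(1-4)
  have A: "Um * Am = four_block_mat
     (U1 * (1\<^sub>m np - aa \<cdot>\<^sub>m Tpp) + U2 * (- (aa \<cdot>\<^sub>m Tmp)))
     (U1 * (- (bb \<cdot>\<^sub>m Tpm)) + U2 * (1\<^sub>m nm - bb \<cdot>\<^sub>m Tmm))
     (U3 * (1\<^sub>m np - aa \<cdot>\<^sub>m Tpp) + U4 * (- (aa \<cdot>\<^sub>m Tmp)))
     (U3 * (- (bb \<cdot>\<^sub>m Tpm)) + U4 * (1\<^sub>m nm - bb \<cdot>\<^sub>m Tmm))"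
    unfolding U_split(5) Am_def by (rule mult_four_block_mat[OF u blocks_c(1-4)])
  have B: "Um * Bm = four_block_mat
     (U1 * (1\<^sub>m np + bb \<cdot>\<^sub>m Tpp) + U2 * (bb \<cdot>\<^sub>m Tmp))
     (U1 * (aa \<cdot>\<^sub>m Tpm) + U2 * (1\<^sub>m nm + aa \<cdot>\<^sub>m Tmm))
     (U3 * (1\<^sub>m np + bb \<cdot>\<^sub>m Tpp) + U4 * (bb \<cdot>\<^sub>m Tmp))
     (U3 * (aa \<cdot>\<^sub>m Tpm) + U4 * (1\<^sub>m nm + aa \<cdot>\<^sub>m Tmm))"
    unfolding U_split(5) Bm_def by (rule mult_four_block_mat[OF u blocks_c(5-8)])
  have eA: "U1 * (1\<^sub>m np - aa \<cdot>\<^sub>m Tpp) + U2 * (- (aa \<cdot>\<^sub>m Tmp)) = 1\<^sub>m np"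
     "U1 * (- (bb \<cdot>\<^sub>m Tpm)) + U2 * (1\<^sub>m nm - bb \<cdot>\<^sub>m Tmm) = Yr"
    using four_block_eq[of _ np np _ nm _ nm, OF _ _ _ _ _ _ _ _ A[unfolded UA Lm_def, symmetric]]
      u blocks_c XYc by auto
  have eB: "U1 * (1\<^sub>m np + bb \<cdot>\<^sub>m Tpp) + U2 * (bb \<cdot>\<^sub>m Tmp) = Xr"
     "U1 * (aa \<cdot>\<^sub>m Tpm) + U2 * (1\<^sub>m nm + aa \<cdot>\<^sub>m Tmm) = Phi_r"
    using four_block_eq[of _ np np _ nm _ nm, OF _ _ _ _ _ _ _ _ B[unfolded UB, symmetric]]
      u blocks_c XYc Phi_c by auto
  show "U1 - aa \<cdot>\<^sub>m (U1 * Tpp) + - (aa \<cdot>\<^sub>m (U2 * Tmp)) = 1\<^sub>m np"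
    using eA(1) by (simp add: mult_1ms[OF u(1) Tpp] mult_ms[OF u(2) Tmp])
  show "- (bb \<cdot>\<^sub>m (U1 * Tpm)) + (U2 - bb \<cdot>\<^sub>m (U2 * Tmm)) = Yr"
    using eA(2) by (simp add: mult_1ms[OF u(2) Tmm] mult_ms[OF u(1) Tpm])
  show "U1 + bb \<cdot>\<^sub>m (U1 * Tpp) + bb \<cdot>\<^sub>m (U2 * Tmp) = Xr"
    using eB(1) by (simp add: mult_1ps[OF u(1) Tpp] mult_s[OF u(2) Tmp])
  show "aa \<cdot>\<^sub>m (U1 * Tpm) + (U2 + aa \<cdot>\<^sub>m (U2 * Tmm)) = Phi_r"
    using eB(2) by (simp add: mult_1ps[OF u(2) Tmm] mult_s[OF u(1) Tpm])
qed

lemma dims: "dim_row U1 = np" "dim_col U1 = np" "dim_row U2 = np" "dim_col U2 = nm"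
  "dim_row Tpp = np" "dim_col Tpp = np" "dim_row Tpm = np" "dim_col Tpm = nm"
  "dim_row Tmp = nm" "dim_col Tmp = np" "dim_row Tmm = nm" "dim_col Tmm = nm"
  "dim_row Xr = np" "dim_col Xr = np" "dim_row Yr = np" "dim_col Yr = nm"
  "dim_row Phi_r = np" "dim_col Phi_r = nm"
  using U_split Tpp Tpm Tmp Tmm XYc Phi_c by auto

lemma ab_pos: "aa + bb > 0" "aa > 0" "bb > 0"
proof -
  show a: "aa > 0" using mu0 by simp
  show b: "bb > 0" using lam0 by simp
  show "aa + bb > 0" using a b by linarith
qed
lemma ab_ne: "aa + bb \<noteq> 0" using ab_pos(1) by linarith

lemma U1_eq: "U1 = 1\<^sub>m np + (aa/(aa+bb)) \<cdot>\<^sub>m (Xr - 1\<^sub>m np)"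
  and Gam_eq: "U1 * Tpp + U2 * Tmp = (1/(aa+bb)) \<cdot>\<^sub>m (Xr - 1\<^sub>m np)"
proof -
  have e: "U1 $$ (i,j) - aa * (U1 * Tpp) $$ (i,j) - aa * (U2 * Tmp) $$ (i,j) = (if i = j then 1 else 0)"
    "U1 $$ (i,j) + bb * (U1 * Tpp) $$ (i,j) + bb * (U2 * Tmp) $$ (i,j) = Xr $$ (i,j)"
    if "i < np" "j < np" for i j
    using arg_cong[OF eqs_abcd(1), of "\<lambda>M. M $$ (i,j)"] arg_cong[OF eqs_abcd(3), of "\<lambda>M. M $$ (i,j)"]
      that by (simp_all add: dims)
  show "U1 = 1\<^sub>m np + (aa/(aa+bb)) \<cdot>\<^sub>m (Xr - 1\<^sub>m np)"
  proof (rule eq_matI)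
    fix i j assume ij: "i < dim_row (1\<^sub>m np + (aa/(aa+bb)) \<cdot>\<^sub>m (Xr - 1\<^sub>m np))"
      "j < dim_col (1\<^sub>m np + (aa/(aa+bb)) \<cdot>\<^sub>m (Xr - 1\<^sub>m np))"
    then have ij': "i < np" "j < np" by auto
    note ee = solve2[OF e[OF ij'] ab_ne]
    show "U1 $$ (i,j) = (1\<^sub>m np + (aa/(aa+bb)) \<cdot>\<^sub>m (Xr - 1\<^sub>m np)) $$ (i,j)"
      using ij' ee(1) ab_pos by (simp add: dims)
  qed (simp_all add: dims)
  show "U1 * Tpp + U2 * Tmp = (1/(aa+bb)) \<cdot>\<^sub>m (Xr - 1\<^sub>m np)"
  proof (rule eq_matI)
    fix i j assume ij: "i < dim_row ((1/(aa+bb)) \<cdot>\<^sub>m (Xr - 1\<^sub>m np))"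
      "j < dim_col ((1/(aa+bb)) \<cdot>\<^sub>m (Xr - 1\<^sub>m np))"
    then have ij': "i < np" "j < np" by auto
    note ee = solve2[OF e[OF ij'] ab_ne]
    show "(U1 * Tpp + U2 * Tmp) $$ (i,j) = ((1/(aa+bb)) \<cdot>\<^sub>m (Xr - 1\<^sub>m np)) $$ (i,j)"
      using ij' ee(2) ab_pos by (simp add: dims)
  qed (simp_all add: dims)
qed

lemma U2_eq: "U2 = Phi_r - (aa/(aa+bb)) \<cdot>\<^sub>m (Phi_r - Yr)"
  and Del_eq: "U1 * Tpm + U2 * Tmm = (1/(aa+bb)) \<cdot>\<^sub>m (Phi_r - Yr)"
proof -
  have e: "- (bb * (U1 * Tpm) $$ (i,j)) + (U2 $$ (i,j) - bb * (U2 * Tmm) $$ (i,j)) = Yr $$ (i,j)"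
    "aa * (U1 * Tpm) $$ (i,j) + (U2 $$ (i,j) + aa * (U2 * Tmm) $$ (i,j)) = Phi_r $$ (i,j)"
    if "i < np" "j < nm" for i j
    using arg_cong[OF eqs_abcd(2), of "\<lambda>M. M $$ (i,j)"] arg_cong[OF eqs_abcd(4), of "\<lambda>M. M $$ (i,j)"]
      that by (simp_all add: dims)
  show "U2 = Phi_r - (aa/(aa+bb)) \<cdot>\<^sub>m (Phi_r - Yr)"
  proof (rule eq_matI)
    fix i j assume ij: "i < dim_row (Phi_r - (aa/(aa+bb)) \<cdot>\<^sub>m (Phi_r - Yr))"
      "j < dim_col (Phi_r - (aa/(aa+bb)) \<cdot>\<^sub>m (Phi_r - Yr))"
    then have ij': "i < np" "j < nm" by (auto simp: dims)
    note ee = solve2'[OF e[OF ij'] ab_ne]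
    show "U2 $$ (i,j) = (Phi_r - (aa/(aa+bb)) \<cdot>\<^sub>m (Phi_r - Yr)) $$ (i,j)"
      using ij' ee(1) ab_pos by (simp add: dims)
  qed (simp_all add: dims)
  show "U1 * Tpm + U2 * Tmm = (1/(aa+bb)) \<cdot>\<^sub>m (Phi_r - Yr)"
  proof (rule eq_matI)
    fix i j assume ij: "i < dim_row ((1/(aa+bb)) \<cdot>\<^sub>m (Phi_r - Yr))"
      "j < dim_col ((1/(aa+bb)) \<cdot>\<^sub>m (Phi_r - Yr))"
    then have ij': "i < np" "j < nm" by (auto simp: dims)
    note ee = solve2'[OF e[OF ij'] ab_ne]
    show "(U1 * Tpm + U2 * Tmm) $$ (i,j) = ((1/(aa+bb)) \<cdot>\<^sub>m (Phi_r - Yr)) $$ (i,j)"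
      using ij' ee(2) ab_pos by (simp add: dims)
  qed (simp_all add: dims)
qed

end

lemma k_gen: assumes "(x::real) + y \<noteq> 0" shows "x/(x+y) + y*(1/(x+y)) = 1"
proof -
  have "x/(x+y) + y*(1/(x+y)) = (x+y)/(x+y)" by (simp only: add_divide_distrib mult_1_right times_divide_eq_right)
  then show ?thesis using assms by simp
qed

context setup7 begin

definition "Kphi = Tpp + Phi_r * Tmp"
definition "Vphi = Tpm + Phi_r * Tmm"
abbreviation "c0 \<equiv> 1 / (aa + bb)"
abbreviation "kap \<equiv> aa / (aa + bb)"

lemma K_c: "Kphi \<in> carrier_mat np np" "Vphi \<in> carrier_mat np nm"
  unfolding Kphi_def Vphi_def using Tpp Tpm Tmp Tmm Phi_c by auto

lemma U1Phi: "U1 * Phi_r = U2"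
proof -
  note u = U_split(1,2)
  have "U1 * Phi_r = 1\<^sub>m np * Phi_r + (kap \<cdot>\<^sub>m (Xr - 1\<^sub>m np)) * Phi_r"
    unfolding U1_eq by (rule add_mult_distrib_mat[OF one_carrier_mat _ Phi_c]) (use XYc in auto)
  also have "(kap \<cdot>\<^sub>m (Xr - 1\<^sub>m np)) * Phi_r = kap \<cdot>\<^sub>m ((Xr - 1\<^sub>m np) * Phi_r)"
    by (rule mult_smult_assoc_mat[OF _ Phi_c]) (use XYc in auto)
  also have "(Xr - 1\<^sub>m np) * Phi_r = Xr * Phi_r - 1\<^sub>m np * Phi_r"
    by (rule minus_mult_distrib_mat[OF XYc(1) one_carrier_mat Phi_c])
  also have "Xr * Phi_r = Yr" using Y_XPhi by simp
  finally have eq: "U1 * Phi_r = 1\<^sub>m np * Phi_r + kap \<cdot>\<^sub>m (Yr - 1\<^sub>m np * Phi_r)" .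
  show ?thesis
  proof (rule eq_matI)
    fix i j assume "i < dim_row U2" "j < dim_col U2"
    then have ij: "i < np" "j < nm" using u by auto
    show "(U1 * Phi_r) $$ (i,j) = U2 $$ (i,j)"
      unfolding eq using ij Phi_c XYc by (subst U2_eq) (simp add: dims algebra_simps)
  qed (use u Phi_c in auto)
qed

lemma UK: "U1 * Kphi = c0 \<cdot>\<^sub>m (Xr - 1\<^sub>m np)"
proof -
  have "U1 * Kphi = U1 * Tpp + U1 * (Phi_r * Tmp)" unfolding Kphi_def
    by (rule mult_add_distrib_mat[OF U_split(1) Tpp]) (use Phi_c Tmp in auto)
  also have "U1 * (Phi_r * Tmp) = U2 * Tmp" using assoc_mult_mat[OF U_split(1) Phi_c Tmp] U1Phi by simp
  finally show ?thesis using Gam_eq by simp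
qed

lemma UV: "U1 * Vphi = c0 \<cdot>\<^sub>m (Phi_r - Yr)"
proof -
  have "U1 * Vphi = U1 * Tpm + U1 * (Phi_r * Tmm)" unfolding Vphi_def
    by (rule mult_add_distrib_mat[OF U_split(1) Tpm]) (use Phi_c Tmm in auto)
  also have "U1 * (Phi_r * Tmm) = U2 * Tmm" using assoc_mult_mat[OF U_split(1) Phi_c Tmm] U1Phi by simp
  finally show ?thesis using Del_eq by simp
qed

definition "Ric X = Tpm + X * Tmm + Tpp * X + X * Tmp * X"

lemma Ric_c: "X \<in> carrier_mat np nm \<Longrightarrow> Ric X \<in> carrier_mat np nm"
  unfolding Ric_def using Tpp Tpm Tmp Tmm by auto

lemma Ric_phi: "Ric Phi_r = Vphi + Kphi * Phi_r"
proof -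
  have "Kphi * Phi_r = Tpp * Phi_r + Phi_r * Tmp * Phi_r" unfolding Kphi_def
    by (rule add_mult_distrib_mat[OF Tpp _ Phi_c]) (use Phi_c Tmp in auto)
  then show ?thesis unfolding Ric_def Vphi_def
    using Tpp Tpm Tmp Tmm Phi_c by (simp add: assoc_add_mat[of _ np nm])
qed

lemma U_Ric: "U1 * Ric Phi_r = 0\<^sub>m np nm"
proof -
  have "U1 * Ric Phi_r = U1 * Vphi + U1 * (Kphi * Phi_r)" unfolding Ric_phi
    by (rule mult_add_distrib_mat[OF U_split(1) K_c(2)]) (use K_c Phi_c in auto)
  also have "U1 * (Kphi * Phi_r) = (U1 * Kphi) * Phi_r" by (rule assoc_mult_mat[symmetric, OF U_split(1) K_c(1) Phi_c])
  also have "(U1 * Kphi) * Phi_r = c0 \<cdot>\<^sub>m ((Xr - 1\<^sub>m np) * Phi_r)" unfolding UK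
    by (rule mult_smult_assoc_mat[OF _ Phi_c]) (use XYc in auto)
  also have "(Xr - 1\<^sub>m np) * Phi_r = Xr * Phi_r - 1\<^sub>m np * Phi_r"
    by (rule minus_mult_distrib_mat[OF XYc(1) one_carrier_mat Phi_c])
  finally have eq: "U1 * Ric Phi_r = c0 \<cdot>\<^sub>m (Phi_r - Yr) + c0 \<cdot>\<^sub>m (Yr - 1\<^sub>m np * Phi_r)"
    unfolding UV using Y_XPhi by simp
  show ?thesis unfolding eq
    by (rule eq_matI) (use Phi_c XYc in \<open>simp_all add: dims algebra_simps\<close>)
qed

lemma U_P: "U1 * (1\<^sub>m np - aa \<cdot>\<^sub>m Kphi) = 1\<^sub>m np"
proof -
  have "U1 * (1\<^sub>m np - aa \<cdot>\<^sub>m Kphi) = U1 - aa \<cdot>\<^sub>m (U1 * Kphi)" by (rule mult_1ms[OF U_split(1) K_c(1)])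
  also have "\<dots> = 1\<^sub>m np" unfolding UK
  proof (rule eq_matI)
    fix i j assume "i < dim_row (1\<^sub>m np :: real mat)" "j < dim_col (1\<^sub>m np :: real mat)"
    then have ij: "i < np" "j < np" by auto
    show "(U1 - aa \<cdot>\<^sub>m (c0 \<cdot>\<^sub>m (Xr - 1\<^sub>m np))) $$ (i,j) = 1\<^sub>m np $$ (i,j)"
      using ij ab_ne by (subst U1_eq) (simp add: dims field_simps)
  qed (use U_split in auto)
  finally show ?thesis .
qed

lemma P_U: "(1\<^sub>m np - aa \<cdot>\<^sub>m Kphi) * U1 = 1\<^sub>m np"
  by (rule mat_mult_left_right_inverse[OF U_split(1) _ U_P]) (use K_c in auto)

lemma Ric_zero: "Ric Phi_r = 0\<^sub>m np nm"
proof -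
  have Pc: "1\<^sub>m np - aa \<cdot>\<^sub>m Kphi \<in> carrier_mat np np" using K_c by auto
  have "Ric Phi_r = ((1\<^sub>m np - aa \<cdot>\<^sub>m Kphi) * U1) * Ric Phi_r" unfolding P_U using Ric_c[OF Phi_c] by simp
  also have "\<dots> = (1\<^sub>m np - aa \<cdot>\<^sub>m Kphi) * (U1 * Ric Phi_r)"
    by (rule assoc_mult_mat[OF Pc U_split(1) Ric_c[OF Phi_c]])
  also have "\<dots> = 0\<^sub>m np nm" unfolding U_Ric by (rule right_mult_zero_mat[OF Pc])
  finally show ?thesis .
qed

lemma X_U: "Xr = U1 * (1\<^sub>m np + bb \<cdot>\<^sub>m Kphi)"
proof -
  have "U1 * (1\<^sub>m np + bb \<cdot>\<^sub>m Kphi) = U1 + bb \<cdot>\<^sub>m (U1 * Kphi)" by (rule mult_1ps[OF U_split(1) K_c(1)])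
  also have "\<dots> = Xr" unfolding UK
  proof (rule eq_matI)
    fix i j assume "i < dim_row Xr" "j < dim_col Xr"
    then have ij: "i < np" "j < np" using XYc by auto
    have k: "kap + bb * c0 = 1" by (rule k_gen[OF ab_ne])
    have kt: "kap * t + bb * (c0 * t) = t" for t
    proof -
      have "kap * t + bb * (c0 * t) = (kap + bb * c0) * t" by (simp add: algebra_simps)
      then show ?thesis using k by simp
    qed
    have "(U1 + bb \<cdot>\<^sub>m (c0 \<cdot>\<^sub>m (Xr - 1\<^sub>m np))) $$ (i,j)
      = (if i = j then 1 else 0) + (kap * (Xr $$ (i,j) - (if i = j then 1 else 0))
         + bb * (c0 * (Xr $$ (i,j) - (if i = j then 1 else 0))))"
      using ij by (subst U1_eq) (simp add: dims)
    then show "(U1 + bb \<cdot>\<^sub>m (c0 \<cdot>\<^sub>m (Xr - 1\<^sub>m np))) $$ (i,j) = Xr $$ (i,j)"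
      unfolding kt by simp
  qed (use U_split XYc in auto)
  finally show ?thesis by simp
qed

lemma Psi_props: "Psi \<in> carrier_mat np nm" "nonneg_mat Psi" "Ric Psi = 0\<^sub>m np nm"
  "\<And>Y. Y \<in> carrier_mat np nm \<Longrightarrow> nonneg_mat Y \<Longrightarrow> Ric Y = 0\<^sub>m np nm \<Longrightarrow> le_mat Psi Y"
  using Psi unfolding min_nonneg_sol_def Ric_def by auto

lemma Psi_le_Phi: "le_mat Psi Phi_r"
  using Psi_props(4)[OF Phi_c Phi_nn Ric_zero] .

end

context setup7 begin

definition "Kpsi = Tpp + Psi * Tmp"
definition "Ppsi = 1\<^sub>m np - aa \<cdot>\<^sub>m Kpsi"
definition "Rpsi = 1\<^sub>m np + bb \<cdot>\<^sub>m Kpsi"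
definition "Pphi = 1\<^sub>m np - aa \<cdot>\<^sub>m Kphi"

lemma Kpsi_c: "Kpsi \<in> carrier_mat np np" "Ppsi \<in> carrier_mat np np" "Rpsi \<in> carrier_mat np np"
  "Pphi \<in> carrier_mat np np"
  unfolding Kpsi_def Ppsi_def Rpsi_def Pphi_def using Tpp Tmp Psi_props(1) K_c by auto

lemma PsiTmp_le: "le_mat (Psi * Tmp) (Phi_r * Tmp)"
  by (rule le_mat_mult[OF Psi_props(1) Tmp Phi_c Tmp Psi_props(2) Tmp_nn Psi_le_Phi le_mat_refl])

lemma PsiTmp_nn: "nonneg_mat (Psi * Tmp)" by (rule nonneg_mult[OF Psi_props(1) Tmp Psi_props(2) Tmp_nn])

lemma Kpsi_ent: "i < np \<Longrightarrow> j < np \<Longrightarrow> Kpsi $$ (i,j) = Tpp $$ (i,j) + (Psi * Tmp) $$ (i,j)"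
  unfolding Kpsi_def using Tpp Tmp Psi_props(1) by simp

lemma Kphi_ent: "i < np \<Longrightarrow> j < np \<Longrightarrow> Kphi $$ (i,j) = Tpp $$ (i,j) + (Phi_r * Tmp) $$ (i,j)"
  unfolding Kphi_def using Tpp Tmp Phi_c by simp

lemma Ppsi_off: "\<forall>i<np. \<forall>j<np. i \<noteq> j \<longrightarrow> Ppsi $$ (i,j) \<le> 0"
proof (intro allI impI)
  fix i j assume ij: "i < np" "j < np" "i \<noteq> j"
  have "Kpsi $$ (i,j) \<ge> 0" using Kpsi_ent[OF ij(1,2)] Tpp_off[OF ij] nonneg_matD[OF PsiTmp_nn, of i j] ij Psi_props(1) Tmp
    by simp
  then show "Ppsi $$ (i,j) \<le> 0" unfolding Ppsi_def using ij Kpsi_c ab_pos by simp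
qed

lemma Ppsi_ge: "i < np \<Longrightarrow> j < np \<Longrightarrow> Ppsi $$ (i,j) \<ge> Pphi $$ (i,j)"
proof -
  assume ij: "i < np" "j < np"
  have "(Psi * Tmp) $$ (i,j) \<le> (Phi_r * Tmp) $$ (i,j)" by (rule le_matD[OF PsiTmp_le]) (use ij Psi_props(1) Tmp in auto)
  then have "Kpsi $$ (i,j) \<le> Kphi $$ (i,j)" using Kpsi_ent[OF ij] Kphi_ent[OF ij] by simp
  then show ?thesis unfolding Ppsi_def Pphi_def using ij Kpsi_c K_c ab_pos
    by (simp add: divide_right_mono)
qed

definition "vv = U1 *\<^sub>v ones np"

lemma vv_c: "vv \<in> carrier_vec np" unfolding vv_def using U_split(1) by auto

lemma vv_pos: "i < np \<Longrightarrow> vv $ i > 0"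
proof -
  assume i: "i < np"
  have eq: "vv $ i = (\<Sum>j<np. U1 $$ (i,j))" unfolding vv_def by (rule mult_ones[OF U_split(1) i])
  have nn: "\<And>j. j < np \<Longrightarrow> U1 $$ (i,j) \<ge> 0" using U1_nn U_split(1) i by (auto simp: nonneg_mat_def)
  show ?thesis
  proof (rule ccontr)
    assume "\<not> ?thesis"
    then have "(\<Sum>j<np. U1 $$ (i,j)) = 0" using eq nn sum_nonneg[of "{..<np}" "\<lambda>j. U1 $$ (i,j)"] by auto
    then have z: "\<And>j. j < np \<Longrightarrow> U1 $$ (i,j) = 0" using nn by (subst (asm) sum_nonneg_eq_0_iff) auto
    have "(U1 * Pphi) $$ (i,i) = (\<Sum>l<np. U1 $$ (i,l) * Pphi $$ (l,i))"
      by (rule mult_mat_sum[OF U_split(1) Kpsi_c(4) i i])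
    also have "\<dots> = 0" using z by simp
    finally show False using U_P i unfolding Pphi_def by simp
  qed
qed

lemma Pphi_vv: "Pphi *\<^sub>v vv = ones np"
proof -
  have "Pphi *\<^sub>v vv = (Pphi * U1) *\<^sub>v ones np" unfolding vv_def
    by (rule assoc_mult_mat_vec[symmetric, OF Kpsi_c(4) U_split(1) ones_c])
  also have "\<dots> = ones np" using P_U unfolding Pphi_def by simp
  finally show ?thesis .
qed

lemma Ppsi_vv: "i < np \<Longrightarrow> (Ppsi *\<^sub>v vv) $ i > 0"
proof -
  assume i: "i < np"
  have "(Ppsi *\<^sub>v vv) $ i = (\<Sum>j<np. Ppsi $$ (i,j) * vv $ j)" by (rule mult_vec_sum[OF Kpsi_c(2) vv_c i])
  also have "\<dots> \<ge> (\<Sum>j<np. Pphi $$ (i,j) * vv $ j)"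
    using Ppsi_ge vv_pos i by (intro sum_mono mult_right_mono) (auto intro: less_imp_le)
  finally have "(Ppsi *\<^sub>v vv) $ i \<ge> (Pphi *\<^sub>v vv) $ i" using mult_vec_sum[OF Kpsi_c(4) vv_c i] by simp
  then show ?thesis using Pphi_vv i by simp
qed

definition "Wpsi = minv Ppsi"

lemma W_props: "invertible_mat Ppsi" "Wpsi \<in> carrier_mat np np" "Ppsi * Wpsi = 1\<^sub>m np" "Wpsi * Ppsi = 1\<^sub>m np"
    "nonneg_mat Wpsi"
  using zmat_inv[OF Kpsi_c(2) Ppsi_off vv_c] vv_pos Ppsi_vv unfolding Wpsi_def by auto

end

context setup7 begin

lemma uminus_zero_mat': "- 0\<^sub>m r c = (0\<^sub>m r c :: real mat)" by (intro eq_matI) auto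

definition "LP = four_block_mat (1\<^sub>m np) Psi (0\<^sub>m nm np) (0\<^sub>m nm nm)"

lemma KPsi: "Kpsi * Psi = Tpp * Psi + Psi * Tmp * Psi"
  unfolding Kpsi_def by (rule add_mult_distrib_mat[OF Tpp _ Psi_props(1)]) (use Psi_props(1) Tmp in auto)

lemma Ric_ent: "i < np \<Longrightarrow> j < nm \<Longrightarrow>
   Tpm $$ (i,j) + (Psi * Tmm) $$ (i,j) + (Tpp * Psi) $$ (i,j) + (Psi * Tmp * Psi) $$ (i,j) = 0"
  using arg_cong[OF Psi_props(3), of "\<lambda>M. M $$ (i,j)"] Psi_props(1) Tpp Tpm Tmp Tmm
  unfolding Ric_def by (simp del: index_mult_mat add: index_mult_mat(2,3))

lemma KPsi_ent: "i < np \<Longrightarrow> j < nm \<Longrightarrow> (Kpsi * Psi) $$ (i,j) = (Tpp * Psi) $$ (i,j) + (Psi * Tmp * Psi) $$ (i,j)"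
  unfolding KPsi using Psi_props(1) Tpp Tmp by (simp del: index_mult_mat add: index_mult_mat(2,3))

lemma one_s_mult: assumes "(K::real mat) \<in> carrier_mat r r" "X \<in> carrier_mat r c"
  shows "(1\<^sub>m r + s \<cdot>\<^sub>m K) * X = X + s \<cdot>\<^sub>m (K * X)" "(1\<^sub>m r - s \<cdot>\<^sub>m K) * X = X - s \<cdot>\<^sub>m (K * X)"
proof -
  show "(1\<^sub>m r + s \<cdot>\<^sub>m K) * X = X + s \<cdot>\<^sub>m (K * X)"
    using add_mult_distrib_mat[of "1\<^sub>m r" r r "s \<cdot>\<^sub>m K" X c] assms mult_smult_assoc_mat[OF assms] by simp
  show "(1\<^sub>m r - s \<cdot>\<^sub>m K) * X = X - s \<cdot>\<^sub>m (K * X)"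
    using minus_mult_distrib_mat[of "1\<^sub>m r" r r "s \<cdot>\<^sub>m K" X c] assms mult_smult_assoc_mat[OF assms] by simp
qed

lemma LPA: "LP * Am = four_block_mat Ppsi (Rpsi * Psi) (0\<^sub>m nm np) (0\<^sub>m nm nm)"
proof -
  have "LP * Am = four_block_mat (1\<^sub>m np * (1\<^sub>m np - aa \<cdot>\<^sub>m Tpp) + Psi * (- (aa \<cdot>\<^sub>m Tmp)))
     (1\<^sub>m np * (- (bb \<cdot>\<^sub>m Tpm)) + Psi * (1\<^sub>m nm - bb \<cdot>\<^sub>m Tmm))
     (0\<^sub>m nm np * (1\<^sub>m np - aa \<cdot>\<^sub>m Tpp) + 0\<^sub>m nm nm * (- (aa \<cdot>\<^sub>m Tmp)))
     (0\<^sub>m nm np * (- (bb \<cdot>\<^sub>m Tpm)) + 0\<^sub>m nm nm * (1\<^sub>m nm - bb \<cdot>\<^sub>m Tmm))"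
    unfolding LP_def Am_def
    by (rule mult_four_block_mat[OF one_carrier_mat Psi_props(1) zero_carrier_mat zero_carrier_mat blocks_c(1-4)])
  also have "\<dots> = four_block_mat Ppsi (Rpsi * Psi) (0\<^sub>m nm np) (0\<^sub>m nm nm)"
  proof (rule cong_four_block_mat)
    show "1\<^sub>m np * (1\<^sub>m np - aa \<cdot>\<^sub>m Tpp) + Psi * (- (aa \<cdot>\<^sub>m Tmp)) = Ppsi"
      unfolding mult_ms[OF Psi_props(1) Tmp]
      by (rule eq_matI) (use Tpp Tmp Psi_props(1) in \<open>auto simp del: index_mult_mat simp add: Ppsi_def Kpsi_def algebra_simps index_mult_mat(2,3)\<close>)
    show "1\<^sub>m np * (- (bb \<cdot>\<^sub>m Tpm)) + Psi * (1\<^sub>m nm - bb \<cdot>\<^sub>m Tmm) = Rpsi * Psi"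
      unfolding Rpsi_def one_s_mult(1)[OF Kpsi_c(1) Psi_props(1)] mult_1ms[OF Psi_props(1) Tmm]
    proof (rule eq_matI)
      fix i j assume "i < dim_row (Psi + bb \<cdot>\<^sub>m (Kpsi * Psi))" "j < dim_col (Psi + bb \<cdot>\<^sub>m (Kpsi * Psi))"
      then have ij: "i < np" "j < nm" using Psi_props(1) Kpsi_c by auto
      show "(1\<^sub>m np * - (bb \<cdot>\<^sub>m Tpm) + (Psi - bb \<cdot>\<^sub>m (Psi * Tmm))) $$ (i,j) = (Psi + bb \<cdot>\<^sub>m (Kpsi * Psi)) $$ (i,j)"
        using ij Ric_ent[OF ij] KPsi_ent[OF ij] Psi_props(1) Tpm Tmm Kpsi_c
        by (simp del: index_mult_mat add: index_mult_mat(2,3) algebra_simps) (simp add: add_divide_distrib[symmetric])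
    qed (use Psi_props(1) Tpm Tmm Kpsi_c in auto)
    show "0\<^sub>m nm np * (1\<^sub>m np - aa \<cdot>\<^sub>m Tpp) + 0\<^sub>m nm nm * (- (aa \<cdot>\<^sub>m Tmp)) = 0\<^sub>m nm np"
      using Tpp Tmp by (simp add: uminus_zero_mat')
    show "0\<^sub>m nm np * (- (bb \<cdot>\<^sub>m Tpm)) + 0\<^sub>m nm nm * (1\<^sub>m nm - bb \<cdot>\<^sub>m Tmm) = 0\<^sub>m nm nm"
      using Tpm Tmm by (simp add: uminus_zero_mat')
  qed
  finally show ?thesis .
qed

lemma LPB: "LP * Bm = four_block_mat Rpsi (Ppsi * Psi) (0\<^sub>m nm np) (0\<^sub>m nm nm)"
proof -
  have "LP * Bm = four_block_mat (1\<^sub>m np * (1\<^sub>m np + bb \<cdot>\<^sub>m Tpp) + Psi * (bb \<cdot>\<^sub>m Tmp))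
     (1\<^sub>m np * (aa \<cdot>\<^sub>m Tpm) + Psi * (1\<^sub>m nm + aa \<cdot>\<^sub>m Tmm))
     (0\<^sub>m nm np * (1\<^sub>m np + bb \<cdot>\<^sub>m Tpp) + 0\<^sub>m nm nm * (bb \<cdot>\<^sub>m Tmp))
     (0\<^sub>m nm np * (aa \<cdot>\<^sub>m Tpm) + 0\<^sub>m nm nm * (1\<^sub>m nm + aa \<cdot>\<^sub>m Tmm))"
    unfolding LP_def Bm_def
    by (rule mult_four_block_mat[OF one_carrier_mat Psi_props(1) zero_carrier_mat zero_carrier_mat blocks_c(5-8)])
  also have "\<dots> = four_block_mat Rpsi (Ppsi * Psi) (0\<^sub>m nm np) (0\<^sub>m nm nm)"
  proof (rule cong_four_block_mat)
    show "1\<^sub>m np * (1\<^sub>m np + bb \<cdot>\<^sub>m Tpp) + Psi * (bb \<cdot>\<^sub>m Tmp) = Rpsi"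
      unfolding mult_s[OF Psi_props(1) Tmp]
      by (rule eq_matI) (use Tpp Tmp Psi_props(1) in \<open>auto simp del: index_mult_mat simp add: Rpsi_def Kpsi_def algebra_simps index_mult_mat(2,3)\<close>)
    show "1\<^sub>m np * (aa \<cdot>\<^sub>m Tpm) + Psi * (1\<^sub>m nm + aa \<cdot>\<^sub>m Tmm) = Ppsi * Psi"
      unfolding Ppsi_def one_s_mult(2)[OF Kpsi_c(1) Psi_props(1)] mult_1ps[OF Psi_props(1) Tmm]
    proof (rule eq_matI)
      fix i j assume "i < dim_row (Psi - aa \<cdot>\<^sub>m (Kpsi * Psi))" "j < dim_col (Psi - aa \<cdot>\<^sub>m (Kpsi * Psi))"
      then have ij: "i < np" "j < nm" using Psi_props(1) Kpsi_c by auto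
      show "(1\<^sub>m np * (aa \<cdot>\<^sub>m Tpm) + (Psi + aa \<cdot>\<^sub>m (Psi * Tmm))) $$ (i,j) = (Psi - aa \<cdot>\<^sub>m (Kpsi * Psi)) $$ (i,j)"
        using ij Ric_ent[OF ij] KPsi_ent[OF ij] Psi_props(1) Tpm Tmm Kpsi_c
        by (simp del: index_mult_mat add: index_mult_mat(2,3) algebra_simps) (simp add: add_divide_distrib[symmetric])
    qed (use Psi_props(1) Tpm Tmm Kpsi_c in auto)
    show "0\<^sub>m nm np * (1\<^sub>m np + bb \<cdot>\<^sub>m Tpp) + 0\<^sub>m nm nm * (bb \<cdot>\<^sub>m Tmp) = 0\<^sub>m nm np"
      using Tpp Tmp by simp
    show "0\<^sub>m nm np * (aa \<cdot>\<^sub>m Tpm) + 0\<^sub>m nm nm * (1\<^sub>m nm + aa \<cdot>\<^sub>m Tmm) = 0\<^sub>m nm nm"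
      using Tpm Tmm by simp
  qed
  finally show ?thesis .
qed

end

context setup7 begin

lemma fwd_eqs: "Ppsi * E + Rpsi * Psi * H = Rpsi" "Ppsi * G + Rpsi * Psi * F = Ppsi * Psi"
proof -
  have c: "Rpsi * Psi \<in> carrier_mat np nm" using Kpsi_c Psi_props(1) by auto
  have "LP * Bm = LP * (Am * N)" using AN by simp
  also have "\<dots> = (LP * Am) * N" unfolding LP_def
    by (rule assoc_mult_mat[symmetric, of _ n n _ n _ n]) (use Am_c N_c Psi_props(1) in auto)
  also have "\<dots> = four_block_mat (Ppsi * E + Rpsi * Psi * H) (Ppsi * G + Rpsi * Psi * F)
     (0\<^sub>m nm np * E + 0\<^sub>m nm nm * H) (0\<^sub>m nm np * G + 0\<^sub>m nm nm * F)"
    unfolding LPA EGHF_N[symmetric]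
    by (rule mult_four_block_mat[OF Kpsi_c(2) c zero_carrier_mat zero_carrier_mat E G H F])
  finally have eq: "four_block_mat Rpsi (Ppsi * Psi) (0\<^sub>m nm np) (0\<^sub>m nm nm) =
     four_block_mat (Ppsi * E + Rpsi * Psi * H) (Ppsi * G + Rpsi * Psi * F)
     (0\<^sub>m nm np * E + 0\<^sub>m nm nm * H) (0\<^sub>m nm np * G + 0\<^sub>m nm nm * F)" unfolding LPB .
  note e = four_block_eq[OF _ _ _ _ _ _ _ _ eq, of np np nm nm]
  show "Ppsi * E + Rpsi * Psi * H = Rpsi" "Ppsi * G + Rpsi * Psi * F = Ppsi * Psi"
    using e Kpsi_c Psi_props(1) c E G H F by auto
qed

definition "R1 = Wpsi * Rpsi"
lemma R1_c: "R1 \<in> carrier_mat np np" unfolding R1_def using W_props Kpsi_c by auto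

lemma R1_eq: "R1 = E + R1 * Psi * H"
proof -
  have c: "Rpsi * Psi \<in> carrier_mat np nm" using Kpsi_c Psi_props(1) by auto
  have "R1 = Wpsi * (Ppsi * E + Rpsi * Psi * H)" unfolding R1_def using fwd_eqs by simp
  also have "\<dots> = Wpsi * (Ppsi * E) + Wpsi * (Rpsi * Psi * H)"
    by (rule mult_add_distrib_mat[OF W_props(2)]) (use Kpsi_c E c H in auto)
  also have "Wpsi * (Ppsi * E) = (Wpsi * Ppsi) * E" by (rule assoc_mult_mat[symmetric, OF W_props(2) Kpsi_c(2) E])
  also have "\<dots> = E" using W_props E by simp
  also have "Wpsi * (Rpsi * Psi * H) = (Wpsi * (Rpsi * Psi)) * H" by (rule assoc_mult_mat[symmetric, OF W_props(2) c H])
  also have "Wpsi * (Rpsi * Psi) = R1 * Psi" unfolding R1_def by (rule assoc_mult_mat[symmetric, OF W_props(2) Kpsi_c(3) Psi_props(1)])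
  finally show ?thesis .
qed

lemma Psi_eq: "Psi = G + R1 * Psi * F"
proof -
  have c: "Rpsi * Psi \<in> carrier_mat np nm" using Kpsi_c Psi_props(1) by auto
  have "Psi = (Wpsi * Ppsi) * Psi" using W_props Psi_props(1) by simp
  also have "\<dots> = Wpsi * (Ppsi * Psi)" by (rule assoc_mult_mat[OF W_props(2) Kpsi_c(2) Psi_props(1)])
  also have "\<dots> = Wpsi * (Ppsi * G + Rpsi * Psi * F)" using fwd_eqs by simp
  also have "\<dots> = Wpsi * (Ppsi * G) + Wpsi * (Rpsi * Psi * F)"
    by (rule mult_add_distrib_mat[OF W_props(2)]) (use Kpsi_c G c F in auto)
  also have "Wpsi * (Ppsi * G) = (Wpsi * Ppsi) * G" by (rule assoc_mult_mat[symmetric, OF W_props(2) Kpsi_c(2) G])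
  also have "\<dots> = G" using W_props G by simp
  also have "Wpsi * (Rpsi * Psi * F) = (Wpsi * (Rpsi * Psi)) * F" by (rule assoc_mult_mat[symmetric, OF W_props(2) c F])
  also have "Wpsi * (Rpsi * Psi) = R1 * Psi" unfolding R1_def by (rule assoc_mult_mat[symmetric, OF W_props(2) Kpsi_c(3) Psi_props(1)])
  finally show ?thesis .
qed

lemma Rpsi_nn: "nonneg_mat Rpsi"
proof (rule nonneg_matI)
  fix i j assume "i < dim_row Rpsi" "j < dim_col Rpsi"
  then have ij: "i < np" "j < np" using Kpsi_c by auto
  have pt: "(Psi * Tmp) $$ (i,j) \<ge> 0" using nonneg_matD[OF PsiTmp_nn] ij Psi_props(1) Tmp by simp
  have e: "Rpsi $$ (i,j) = (if i = j then 1 else 0) + bb * (Tpp $$ (i,j) + (Psi * Tmp) $$ (i,j))"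
    unfolding Rpsi_def using ij Kpsi_c Kpsi_ent[OF ij] by simp
  show "Rpsi $$ (i,j) \<ge> 0"
  proof (cases "i = j")
    case True
    have "Tpp $$ (i,i) \<ge> - lam" using Tpp_diag ij by auto
    then have "bb * Tpp $$ (i,i) \<ge> -1" using lam0 by (simp add: field_simps)
    moreover have "bb * (Psi * Tmp) $$ (i,j) \<ge> 0" using pt lam0 by simp
    ultimately show ?thesis using e True by (simp add: algebra_simps)
  next
    case False
    then have "Tpp $$ (i,j) \<ge> 0" using Tpp_off ij by auto
    then show ?thesis using e False pt lam0 by simp
  qed
qed

lemma R1_nn: "nonneg_mat R1" unfolding R1_def by (rule nonneg_mult[OF W_props(2) Kpsi_c(3) W_props(5) Rpsi_nn])

definition "Mm = four_block_mat R1 (R1 * Psi) (0\<^sub>m nm np) (0\<^sub>m nm nm)"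

lemma Mm_sol: "fD Mm = Mm"
proof -
  have c: "R1 * Psi \<in> carrier_mat np nm" using R1_c Psi_props(1) by auto
  have "fD Mm = four_block_mat (R1 * Psi * H + E) ((R1 * (R1 * Psi) + R1 * Psi * 0\<^sub>m nm nm) * F + R1 * G)
      (0\<^sub>m nm nm * H) ((0\<^sub>m nm np * (R1 * Psi) + 0\<^sub>m nm nm * 0\<^sub>m nm nm) * F + 0\<^sub>m nm np * G)"
    unfolding Mm_def by (rule fD_block[OF R1_c c zero_carrier_mat zero_carrier_mat])
  also have "\<dots> = Mm" unfolding Mm_def
  proof (rule cong_four_block_mat)
    show "R1 * Psi * H + E = R1" using R1_eq c H E by (metis comm_add_mat mult_carrier_mat)
    have z: "R1 * Psi * 0\<^sub>m nm nm = 0\<^sub>m np nm" by (rule right_mult_zero_mat[OF c])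
    have a: "R1 * (R1 * Psi) + 0\<^sub>m np nm = R1 * (R1 * Psi)" by (rule right_add_zero_mat) (use R1_c c in auto)
    have "(R1 * (R1 * Psi) + R1 * Psi * 0\<^sub>m nm nm) * F + R1 * G = R1 * (R1 * Psi * F) + R1 * G"
      unfolding z a using assoc_mult_mat[OF R1_c c F] by simp
    also have "\<dots> = R1 * (R1 * Psi * F + G)"
      by (rule mult_add_distrib_mat[symmetric, OF R1_c]) (use c F G in auto)
    also have "R1 * Psi * F + G = Psi" using Psi_eq c F G by (metis comm_add_mat mult_carrier_mat)
    finally show "(R1 * (R1 * Psi) + R1 * Psi * 0\<^sub>m nm nm) * F + R1 * G = R1 * Psi" .
    show "0\<^sub>m nm nm * H = 0\<^sub>m nm np" using H by simp
    show "(0\<^sub>m nm np * (R1 * Psi) + 0\<^sub>m nm nm * 0\<^sub>m nm nm) * F + 0\<^sub>m nm np * G = 0\<^sub>m nm nm" using c F G R1_c Psi_props(1) by simp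
  qed
  finally show ?thesis .
qed

lemma Mm_props: "Mm \<in> carrier_mat n n" "nonneg_mat Mm"
proof -
  have c: "R1 * Psi \<in> carrier_mat np nm" using R1_c Psi_props(1) by auto
  show "Mm \<in> carrier_mat n n" unfolding Mm_def using R1_c by simp
  show "nonneg_mat Mm" unfolding Mm_def
    using four_block_nonneg[OF R1_c c zero_carrier_mat zero_carrier_mat] R1_nn
      nonneg_mult[OF R1_c Psi_props(1) R1_nn Psi_props(2)] nonneg_zero by auto
qed

lemma RD_le_M: "le_mat RD Mm"
  using RD' Mm_props Mm_sol unfolding min_nonneg_sol_def by auto

lemma Phi_eq_Psi: "Phi_r = Psi"
proof -
  have c: "R1 * Psi \<in> carrier_mat np nm" using R1_c Psi_props(1) by auto
  have h: "le_mat (four_block_mat Xr Yr (0\<^sub>m nm np) (0\<^sub>m nm nm)) Mm"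
    by (rule subst[OF RD_form, of "\<lambda>R. le_mat R Mm", OF RD_le_M])
  have "le_mat Yr (R1 * Psi)"
    using h four_block_le[OF XYc zero_carrier_mat zero_carrier_mat R1_c c zero_carrier_mat zero_carrier_mat]
    unfolding Mm_def by auto
  then have "le_mat (Yr * F) (R1 * Psi * F)"
    by (intro le_mat_mult[OF XYc(2) F c F XYZW_nn(2) EGHF_nn(4) _ le_mat_refl])
  then have "le_mat (G + Yr * F) (G + R1 * Psi * F)"
    by (intro le_mat_add[of _ np nm]) (use G XYc F c le_mat_refl in auto)
  then have "le_mat Phi_r Psi" unfolding Phi_r_def using Psi_eq by simp
  then show ?thesis using Psi_le_Phi le_mat_antisym by auto
qed

lemma W_is_U1: "Wpsi = U1"
proof -
  have "Ppsi * U1 = 1\<^sub>m np" using P_U unfolding Ppsi_def Kpsi_def Kphi_def Phi_eq_Psi .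
  then show ?thesis unfolding Wpsi_def using minv_eq[OF Kpsi_c(2) U_split(1)] by simp
qed

lemma X_is_R1: "Xr = R1"
  using X_U unfolding R1_def W_is_U1 Rpsi_def Kpsi_def Kphi_def Phi_eq_Psi .

lemma RD_final: "RD = four_block_mat R1 (R1 * Psi) (0\<^sub>m nm np) (0\<^sub>m nm nm)"
  using RD_form[unfolded Y_XPhi X_is_R1 Phi_eq_Psi] .

end

definition rsum :: "real mat \<Rightarrow> nat \<Rightarrow> real" where
  "rsum A i = (\<Sum>j<dim_col A. A $$ (i,j))"

lemma rsum_mult: assumes "A \<in> carrier_mat r q" "B \<in> carrier_mat q c" "i < r"
  shows "rsum (A * B) i = (\<Sum>l<q. A $$ (i,l) * rsum B l)"
proof -
  have "rsum (A * B) i = (\<Sum>j<c. \<Sum>l<q. A $$ (i,l) * B $$ (l,j))"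
    unfolding rsum_def using assms
    by (auto intro!: sum.cong simp del: index_mult_mat simp add: mult_mat_sum[OF assms(1,2)] index_mult_mat(3))
  also have "\<dots> = (\<Sum>l<q. \<Sum>j<c. A $$ (i,l) * B $$ (l,j))" by (rule sum.swap)
  also have "\<dots> = (\<Sum>l<q. A $$ (i,l) * rsum B l)"
    unfolding rsum_def using assms by (simp add: sum_distrib_left)
  finally show ?thesis .
qed

lemma lim_mult: fixes A B :: "nat \<Rightarrow> real mat"
  assumes "\<And>k. A k \<in> carrier_mat r q" "\<And>k. B k \<in> carrier_mat q c" "A' \<in> carrier_mat r q" "B' \<in> carrier_mat q c"
    and "\<And>i l. i < r \<Longrightarrow> l < q \<Longrightarrow> (\<lambda>k. A k $$ (i,l)) \<longlonglongrightarrow> A' $$ (i,l)"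
    and "\<And>l j. l < q \<Longrightarrow> j < c \<Longrightarrow> (\<lambda>k. B k $$ (l,j)) \<longlonglongrightarrow> B' $$ (l,j)"
    and "i < r" "j < c"
  shows "(\<lambda>k. (A k * B k) $$ (i,j)) \<longlonglongrightarrow> (A' * B') $$ (i,j)"
proof -
  have "(\<lambda>k. \<Sum>l<q. A k $$ (i,l) * B k $$ (l,j)) \<longlonglongrightarrow> (\<Sum>l<q. A' $$ (i,l) * B' $$ (l,j))"
    using assms by (intro tendsto_sum tendsto_mult) auto
  then show ?thesis using mult_mat_sum[OF assms(1,2) assms(7,8)] mult_mat_sum[OF assms(3,4) assms(7,8)]
    by simp
qed

context setup7 begin

definition "Npp = Tpp + lam \<cdot>\<^sub>m 1\<^sub>m np"
definition "Nmm = Tmm + lam \<cdot>\<^sub>m 1\<^sub>m nm"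
definition "fK X = (1/(2*lam)) \<cdot>\<^sub>m (Tpm + X * Nmm + Npp * X + X * Tmp * X)"

lemma N_c': "Npp \<in> carrier_mat np np" "Nmm \<in> carrier_mat nm nm"
  unfolding Npp_def Nmm_def using Tpp Tmm by auto

lemma Npp_nn: "nonneg_mat Npp"
proof (rule nonneg_matI)
  fix i j assume "i < dim_row Npp" "j < dim_col Npp"
  then have ij: "i < np" "j < np" using N_c' by auto
  show "Npp $$ (i,j) \<ge> 0" using ij Tpp Tpp_off[of i j] Tpp_diag[of i] unfolding Npp_def by auto
qed

lemma Nmm_nn: "nonneg_mat Nmm"
proof (rule nonneg_matI)
  fix i j assume "i < dim_row Nmm" "j < dim_col Nmm"
  then have ij: "i < nm" "j < nm" using N_c' by auto
  show "Nmm $$ (i,j) \<ge> 0" using ij Tmm Tmm_off[of i j] Tmm_diag[of i] unfolding Nmm_def by auto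
qed

lemma fK_c: "X \<in> carrier_mat np nm \<Longrightarrow> fK X \<in> carrier_mat np nm"
  unfolding fK_def using N_c' Tpm Tmp by auto

lemma fK_nn: "X \<in> carrier_mat np nm \<Longrightarrow> nonneg_mat X \<Longrightarrow> nonneg_mat (fK X)"
proof -
  assume X: "X \<in> carrier_mat np nm" "nonneg_mat X"
  have a: "nonneg_mat (X * Nmm)" by (rule nonneg_mult[OF X(1) N_c'(2) X(2) Nmm_nn])
  have b: "nonneg_mat (Npp * X)" by (rule nonneg_mult[OF N_c'(1) X(1) Npp_nn X(2)])
  have c: "nonneg_mat (X * Tmp * X)"
    by (rule nonneg_mult[OF mult_carrier_mat[OF X(1) Tmp] X(1) nonneg_mult[OF X(1) Tmp X(2) Tmp_nn] X(2)])
  have "nonneg_mat (Tpm + X * Nmm + Npp * X + X * Tmp * X)"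
    using X N_c' Tpm Tmp a b c Tpm_nn by (intro nonneg_add[of _ np nm]) auto
  then show ?thesis unfolding fK_def using lam0 by (intro nonneg_smult) auto
qed

lemma fK_mono: assumes X: "X \<in> carrier_mat np nm" "Y \<in> carrier_mat np nm" "nonneg_mat X" "le_mat X Y"
  shows "le_mat (fK X) (fK Y)"
proof -
  have XT: "le_mat (X * Tmp) (Y * Tmp)" by (rule le_mat_mult[OF X(1) Tmp X(2) Tmp X(3) Tmp_nn X(4) le_mat_refl])
  have 1: "le_mat (X * Nmm) (Y * Nmm)" by (rule le_mat_mult[OF X(1) N_c'(2) X(2) N_c'(2) X(3) Nmm_nn X(4) le_mat_refl])
  have 2: "le_mat (Npp * X) (Npp * Y)" by (rule le_mat_mult[OF N_c'(1) X(1) N_c'(1) X(2) Npp_nn X(3) le_mat_refl X(4)])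
  have 3: "le_mat (X * Tmp * X) (Y * Tmp * Y)"
    by (rule le_mat_mult[of _ np np _ nm]) (use X Tmp XT nonneg_mult[OF X(1) Tmp X(3) Tmp_nn] in auto)
  have "le_mat (Tpm + X * Nmm + Npp * X + X * Tmp * X) (Tpm + Y * Nmm + Npp * Y + Y * Tmp * Y)"
    using X N_c' Tpm Tmp 1 2 3 le_mat_refl by (intro le_mat_add[of _ np nm]) auto
  then show ?thesis unfolding fK_def using lam0 by (intro le_mat_smult) auto
qed

lemma fK_fix: assumes X: "X \<in> carrier_mat np nm" and fx: "fK X = X" shows "Ric X = 0\<^sub>m np nm"
proof -
  have a: "X * Nmm = X * Tmm + lam \<cdot>\<^sub>m X" unfolding Nmm_def
    using mult_add_distrib_mat[OF X Tmm, of "lam \<cdot>\<^sub>m 1\<^sub>m nm"] X mult_smult_distrib[OF X, of "1\<^sub>m nm" nm lam] by simp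
  have b: "Npp * X = Tpp * X + lam \<cdot>\<^sub>m X" unfolding Npp_def
    using add_mult_distrib_mat[OF Tpp _ X, of "lam \<cdot>\<^sub>m 1\<^sub>m np"] X mult_smult_assoc_mat[OF _ X, of "1\<^sub>m np" np lam] by simp
  show ?thesis
  proof (rule eq_matI)
    fix i j assume "i < dim_row (0\<^sub>m np nm :: real mat)" "j < dim_col (0\<^sub>m np nm :: real mat)"
    then have ij: "i < np" "j < nm" by auto
    have e: "(fK X) $$ (i,j) = X $$ (i,j)" using fx by simp
    have "(fK X) $$ (i,j) = (1/(2*lam)) * (Tpm $$ (i,j) + (X * Tmm) $$ (i,j) + lam * X $$ (i,j)
        + (Tpp * X) $$ (i,j) + lam * X $$ (i,j) + (X * Tmp * X) $$ (i,j))"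
      unfolding fK_def a b using ij X Tpm Tmm Tpp Tmp by (simp del: index_mult_mat add: index_mult_mat(2,3))
    then have "Tpm $$ (i,j) + (X * Tmm) $$ (i,j) + (Tpp * X) $$ (i,j) + (X * Tmp * X) $$ (i,j) = 0"
      using e lam0 by (simp add: field_simps)
    then show "Ric X $$ (i,j) = 0\<^sub>m np nm $$ (i,j)"
      unfolding Ric_def using ij X Tpm Tmm Tpp Tmp by (simp del: index_mult_mat add: index_mult_mat(2,3))
  qed (use X Ric_c in auto)
qed

end

lemma rsum_add: "A \<in> carrier_mat r c \<Longrightarrow> B \<in> carrier_mat r c \<Longrightarrow> i < r \<Longrightarrow> rsum (A + B) i = rsum A i + rsum B i"
  unfolding rsum_def by (simp add: sum.distrib)

lemma rsum_smult: "A \<in> carrier_mat r c \<Longrightarrow> i < r \<Longrightarrow> rsum (a \<cdot>\<^sub>m A) i = a * rsum A i"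
  unfolding rsum_def by (simp add: sum_distrib_left)

lemma rsum_nn: "nonneg_mat A \<Longrightarrow> i < dim_row A \<Longrightarrow> rsum A i \<ge> 0"
  unfolding rsum_def by (auto intro!: sum_nonneg simp: nonneg_mat_def)

lemma entry_le_rsum: "nonneg_mat A \<Longrightarrow> i < dim_row A \<Longrightarrow> j < dim_col A \<Longrightarrow> A $$ (i,j) \<le> rsum A i"
  unfolding rsum_def nonneg_mat_def
  by (rule member_le_sum) auto

context setup7 begin

lemma rsum_Tmm: "l < nm \<Longrightarrow> rsum Tmm l = - rsum Tmp l"
  using rowsum_m[of l] Tmm Tmp unfolding rsum_def by simp

lemma rsum_Tpp: "i < np \<Longrightarrow> rsum Tpp i = - rsum Tpm i"
  using rowsum_p[of i] Tpp Tpm unfolding rsum_def by simp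

lemma rsum_Nmm: "l < nm \<Longrightarrow> rsum Nmm l = lam - rsum Tmp l"
proof -
  assume l: "l < nm"
  have "rsum Nmm l = rsum Tmm l + lam * rsum (1\<^sub>m nm) l"
    unfolding Nmm_def using l Tmm by (simp add: rsum_add[of _ nm nm] rsum_smult[of _ nm nm])
  also have "rsum (1\<^sub>m nm) l = 1" unfolding rsum_def using l by simp
  finally show ?thesis using rsum_Tmm[OF l] by simp
qed

lemma rsum_Npp: "i < np \<Longrightarrow> rsum Npp i = lam - rsum Tpm i"
proof -
  assume i: "i < np"
  have "rsum Npp i = rsum Tpp i + lam * rsum (1\<^sub>m np) i"
    unfolding Npp_def using i Tpp by (simp add: rsum_add[of _ np np] rsum_smult[of _ np np])
  also have "rsum (1\<^sub>m np) i = 1" unfolding rsum_def using i by simp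
  finally show ?thesis using rsum_Tpp[OF i] by simp
qed

lemma fK_rows: assumes X: "X \<in> carrier_mat np nm" "nonneg_mat X" "\<forall>i<np. rsum X i \<le> 1"
  shows "\<forall>i<np. rsum (fK X) i \<le> 1"
proof (intro allI impI)
  fix i assume i: "i < np"
  have XT: "X * Tmp \<in> carrier_mat np np" using X Tmp by auto
  have XTn: "nonneg_mat (X * Tmp)" by (rule nonneg_mult[OF X(1) Tmp X(2) Tmp_nn])
  have Xn: "\<And>l. l < nm \<Longrightarrow> X $$ (i,l) \<ge> 0" using X i by (auto simp: nonneg_mat_def)
  have e: "rsum (fK X) i = (1/(2*lam)) * (rsum Tpm i + rsum (X * Nmm) i + rsum (Npp * X) i + rsum (X * Tmp * X) i)"
    unfolding fK_def using i X N_c' Tpm Tmp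
    by (simp add: rsum_smult[of _ np nm] rsum_add[of _ np nm])
  have 1: "rsum (X * Nmm) i = (\<Sum>l<nm. X $$ (i,l) * (lam - rsum Tmp l))"
    using rsum_mult[OF X(1) N_c'(2) i] rsum_Nmm by simp
  have "rsum (X * Tmp * X) i = (\<Sum>l<np. (X * Tmp) $$ (i,l) * rsum X l)" by (rule rsum_mult[OF XT X(1) i])
  also have "\<dots> \<le> (\<Sum>l<np. (X * Tmp) $$ (i,l))"
  proof (rule sum_mono)
    fix l assume l: "l \<in> {..<np}"
    have "(X * Tmp) $$ (i,l) \<ge> 0" by (rule nonneg_matD[OF XTn]) (use i l XT in auto)
    then show "(X * Tmp) $$ (i,l) * rsum X l \<le> (X * Tmp) $$ (i,l)"
      using X(3) l by (simp add: mult_left_le)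
  qed
  also have "\<dots> = rsum (X * Tmp) i" unfolding rsum_def using XT Tmp by simp
  also have "\<dots> = (\<Sum>l<nm. X $$ (i,l) * rsum Tmp l)" by (rule rsum_mult[OF X(1) Tmp i])
  finally have 2: "rsum (X * Tmp * X) i \<le> (\<Sum>l<nm. X $$ (i,l) * rsum Tmp l)" .
  have "rsum (X * Nmm) i + rsum (X * Tmp * X) i \<le> (\<Sum>l<nm. X $$ (i,l) * (lam - rsum Tmp l) + X $$ (i,l) * rsum Tmp l)"
    unfolding 1 sum.distrib using 2 by simp
  also have "\<dots> = lam * rsum X i" unfolding rsum_def using X by (simp add: algebra_simps sum_distrib_left)
  also have "\<dots> \<le> lam" using X(3) i lam0 by (simp add: mult_left_le)
  finally have A: "rsum (X * Nmm) i + rsum (X * Tmp * X) i \<le> lam" .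
  have "rsum (Npp * X) i = (\<Sum>l<np. Npp $$ (i,l) * rsum X l)" by (rule rsum_mult[OF N_c'(1) X(1) i])
  also have "\<dots> \<le> (\<Sum>l<np. Npp $$ (i,l))"
  proof (rule sum_mono)
    fix l assume l: "l \<in> {..<np}"
    have "Npp $$ (i,l) \<ge> 0" using nonneg_matD[OF Npp_nn, of i l] i l N_c' by auto
    then show "Npp $$ (i,l) * rsum X l \<le> Npp $$ (i,l)"
      using X(3) l by (simp add: mult_left_le)
  qed
  also have "\<dots> = rsum Npp i" unfolding rsum_def using N_c' by simp
  also have "\<dots> = lam - rsum Tpm i" by (rule rsum_Npp[OF i])
  finally have B: "rsum (Npp * X) i \<le> lam - rsum Tpm i" .
  have "rsum Tpm i + rsum (X * Nmm) i + rsum (Npp * X) i + rsum (X * Tmp * X) i \<le> 2 * lam"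
    using A B by simp
  then show "rsum (fK X) i \<le> 1" unfolding e using lam0 by (simp add: field_simps)
qed

definition "sK k = (fK ^^ k) (0\<^sub>m np nm)"

lemma sK_props: "sK k \<in> carrier_mat np nm \<and> nonneg_mat (sK k) \<and> (\<forall>i<np. rsum (sK k) i \<le> 1)"
proof (induction k)
  case 0
  then show ?case unfolding sK_def using nonneg_zero by (simp add: rsum_def)
next
  case (Suc k)
  have e: "sK (Suc k) = fK (sK k)" unfolding sK_def by simp
  show ?case unfolding e using Suc fK_c fK_nn fK_rows by auto
qed

lemma sK_mono: "le_mat (sK k) (sK (Suc k))"
proof (induction k)
  case 0
  have "sK 1 \<in> carrier_mat np nm" "nonneg_mat (sK 1)" using sK_props by auto
  then show ?case unfolding sK_def by (auto simp: le_mat_def nonneg_mat_def)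
next
  case (Suc k)
  have e: "sK (Suc k) = fK (sK k)" "sK (Suc (Suc k)) = fK (sK (Suc k))" unfolding sK_def by simp_all
  show ?case unfolding e(2) unfolding e(1) using fK_mono sK_props Suc[unfolded e(1)] e(1) by metis
qed

end

context setup7 begin

definition "LimM = mat np nm (\<lambda>(i,j). SUP k. sK k $$ (i,j))"

lemma LimM_c: "LimM \<in> carrier_mat np nm" unfolding LimM_def by simp
lemma sKc: "sK k \<in> carrier_mat np nm" using sK_props by auto

lemma sK_ent: "i < np \<Longrightarrow> j < nm \<Longrightarrow> 0 \<le> sK k $$ (i,j) \<and> sK k $$ (i,j) \<le> 1"
proof -
  assume ij: "i < np" "j < nm"
  have p: "sK k \<in> carrier_mat np nm" "nonneg_mat (sK k)" "\<forall>i<np. rsum (sK k) i \<le> 1" using sK_props by auto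
  have "sK k $$ (i,j) \<le> rsum (sK k) i" by (rule entry_le_rsum) (use p ij in auto)
  then show ?thesis using p ij by (auto simp: nonneg_mat_def)
qed

lemma sK_inc: "i < np \<Longrightarrow> j < nm \<Longrightarrow> incseq (\<lambda>k. sK k $$ (i,j))"
proof -
  assume ij: "i < np" "j < nm"
  have "sK k $$ (i,j) \<le> sK (Suc k) $$ (i,j)" for k
    by (rule le_matD[OF sK_mono]) (use carrier_matD[OF sKc[of k]] ij in auto)
  then show ?thesis by (rule incseq_SucI)
qed

lemma sK_lim: "i < np \<Longrightarrow> j < nm \<Longrightarrow> (\<lambda>k. sK k $$ (i,j)) \<longlonglongrightarrow> LimM $$ (i,j)"
proof -
  assume ij: "i < np" "j < nm"
  have "bdd_above (range (\<lambda>k. sK k $$ (i,j)))" using sK_ent[OF ij] by (intro bdd_aboveI[of _ 1]) auto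
  from LIMSEQ_incseq_SUP[OF this sK_inc[OF ij]] show ?thesis unfolding LimM_def using ij by simp
qed

lemma LimM_nn: "nonneg_mat LimM"
proof (rule nonneg_matI)
  fix i j assume "i < dim_row LimM" "j < dim_col LimM"
  then have ij: "i < np" "j < nm" using LimM_c by auto
  show "LimM $$ (i,j) \<ge> 0"
    by (rule LIMSEQ_le_const[OF sK_lim[OF ij]]) (use sK_ent[OF ij] in auto)
qed

lemma LimM_rows: "i < np \<Longrightarrow> rsum LimM i \<le> 1"
proof -
  assume i: "i < np"
  have "(\<lambda>k. \<Sum>j<nm. sK k $$ (i,j)) \<longlonglongrightarrow> (\<Sum>j<nm. LimM $$ (i,j))"
    by (intro tendsto_sum) (use sK_lim i in auto)
  moreover have "(\<Sum>j<nm. sK k $$ (i,j)) \<le> 1" for k using sK_props[of k] sKc[of k] i unfolding rsum_def by auto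
  ultimately have "(\<Sum>j<nm. LimM $$ (i,j)) \<le> 1" by (intro LIMSEQ_le_const2) auto
  then show ?thesis unfolding rsum_def using LimM_c by simp
qed


lemma LimM_fix: "fK LimM = LimM"
proof (rule eq_matI)
  fix i j assume "i < dim_row LimM" "j < dim_col LimM"
  then have ij: "i < np" "j < nm" using LimM_c by auto
  have L: "\<And>i j. i < np \<Longrightarrow> j < nm \<Longrightarrow> (\<lambda>k. sK k $$ (i,j)) \<longlonglongrightarrow> LimM $$ (i,j)" by (rule sK_lim)
  have C: "\<And>A i j. (\<lambda>k. A $$ (i,j)) \<longlonglongrightarrow> (A :: real mat) $$ (i,j)" by simp
  have L1: "(\<lambda>k. (sK k * Nmm) $$ (i,j)) \<longlonglongrightarrow> (LimM * Nmm) $$ (i,j)"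
    by (rule lim_mult[OF sKc N_c'(2) LimM_c N_c'(2) L C ij])
  have L2: "(\<lambda>k. (Npp * sK k) $$ (i,j)) \<longlonglongrightarrow> (Npp * LimM) $$ (i,j)"
    by (rule lim_mult[OF N_c'(1) sKc N_c'(1) LimM_c C L ij])
  have L3: "\<And>i j. i < np \<Longrightarrow> j < np \<Longrightarrow> (\<lambda>k. (sK k * Tmp) $$ (i,j)) \<longlonglongrightarrow> (LimM * Tmp) $$ (i,j)"
    by (rule lim_mult[OF sKc Tmp LimM_c Tmp L C])
  have L4: "(\<lambda>k. (sK k * Tmp * sK k) $$ (i,j)) \<longlonglongrightarrow> (LimM * Tmp * LimM) $$ (i,j)"
    by (rule lim_mult[OF _ sKc _ LimM_c L3 L ij]) (use mult_carrier_mat[OF sKc Tmp] LimM_c Tmp in auto)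
  have ent: "\<And>X. X \<in> carrier_mat np nm \<Longrightarrow> fK X $$ (i,j) =
      (1/(2*lam)) * (Tpm $$ (i,j) + (X * Nmm) $$ (i,j) + (Npp * X) $$ (i,j) + (X * Tmp * X) $$ (i,j))"
    unfolding fK_def using ij N_c' Tpm Tmp by (simp del: index_mult_mat add: index_mult_mat(2,3))
  have "(\<lambda>k. fK (sK k) $$ (i,j)) \<longlonglongrightarrow> fK LimM $$ (i,j)"
    unfolding ent[OF sKc] ent[OF LimM_c] by (intro tendsto_intros L1 L2 L4)
  moreover have "fK (sK k) = sK (Suc k)" for k unfolding sK_def by simp
  ultimately have "(\<lambda>k. sK (Suc k) $$ (i,j)) \<longlonglongrightarrow> fK LimM $$ (i,j)" by simp
  moreover have "(\<lambda>k. sK (Suc k) $$ (i,j)) \<longlonglongrightarrow> LimM $$ (i,j)" using LIMSEQ_Suc[OF sK_lim[OF ij]] .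
  ultimately show "fK LimM $$ (i,j) = LimM $$ (i,j)" using LIMSEQ_unique by blast
qed (use LimM_c fK_c in auto)

lemma Psi_rows: "i < np \<Longrightarrow> rsum Psi i \<le> 1"
proof -
  assume i: "i < np"
  have le: "le_mat Psi LimM" using Psi_props(4)[OF LimM_c LimM_nn fK_fix[OF LimM_c LimM_fix]] .
  have "rsum Psi i \<le> rsum LimM i" unfolding rsum_def using le_matD[OF le] i Psi_props(1) LimM_c
    by (auto intro!: sum_mono)
  then show ?thesis using LimM_rows[OF i] by simp
qed

end

context setup7 begin

definition "Jm = 1\<^sub>m nm - bb \<cdot>\<^sub>m (Tmm + Tmp * Psi)"

lemma Jm_c: "Jm \<in> carrier_mat nm nm" unfolding Jm_def using Tmm Tmp Psi_props(1) by auto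

lemma TmpPsi_nn: "nonneg_mat (Tmp * Psi)" by (rule nonneg_mult[OF Tmp Psi_props(1) Tmp_nn Psi_props(2)])

lemma Jm_ent: "i < nm \<Longrightarrow> j < nm \<Longrightarrow> Jm $$ (i,j) = (if i = j then 1 else 0) - bb * (Tmm $$ (i,j) + (Tmp * Psi) $$ (i,j))"
  unfolding Jm_def using Tmm Tmp Psi_props(1) by (simp del: index_mult_mat add: index_mult_mat(2,3))

lemma Jm_off: "\<forall>i<nm. \<forall>j<nm. i \<noteq> j \<longrightarrow> Jm $$ (i,j) \<le> 0"
proof (intro allI impI)
  fix i j assume ij: "i < nm" "j < nm" "i \<noteq> j"
  have "(Tmp * Psi) $$ (i,j) \<ge> 0" by (rule nonneg_matD[OF TmpPsi_nn]) (use ij Tmp Psi_props(1) in auto)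
  moreover have "Tmm $$ (i,j) \<ge> 0" using Tmm_off ij by auto
  ultimately show "Jm $$ (i,j) \<le> 0" using Jm_ent[OF ij(1,2)] ij lam0 by simp
qed

lemma Jm_row: "i < nm \<Longrightarrow> (Jm *\<^sub>v ones nm) $ i > 0"
proof -
  assume i: "i < nm"
  have "(Jm *\<^sub>v ones nm) $ i = (\<Sum>j<nm. Jm $$ (i,j))" by (rule mult_ones[OF Jm_c i])
  also have "\<dots> = (\<Sum>j<nm. (if i = j then 1 else 0) - bb * (Tmm $$ (i,j) + (Tmp * Psi) $$ (i,j)))"
    using Jm_ent i by simp
  also have "\<dots> = 1 - bb * (rsum Tmm i + rsum (Tmp * Psi) i)"
    unfolding rsum_def using i Tmm Tmp Psi_props(1) carrier_matD[OF Psi_props(1)]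
    by (simp del: index_mult_mat add: sum_subtractf sum_distrib_left sum.distrib index_mult_mat(2,3) sum_divide_distrib add_divide_distrib)
  finally have e: "(Jm *\<^sub>v ones nm) $ i = 1 - bb * (rsum Tmm i + rsum (Tmp * Psi) i)" .
  have "rsum (Tmp * Psi) i = (\<Sum>l<np. Tmp $$ (i,l) * rsum Psi l)" by (rule rsum_mult[OF Tmp Psi_props(1) i])
  also have "\<dots> \<le> (\<Sum>l<np. Tmp $$ (i,l))"
  proof (rule sum_mono)
    fix l assume l: "l \<in> {..<np}"
    have "Tmp $$ (i,l) \<ge> 0" by (rule nonneg_matD[OF Tmp_nn]) (use i l Tmp in auto)
    then show "Tmp $$ (i,l) * rsum Psi l \<le> Tmp $$ (i,l)" using Psi_rows l by (simp add: mult_left_le)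
  qed
  also have "\<dots> = rsum Tmp i" unfolding rsum_def using Tmp by simp
  finally have "rsum Tmm i + rsum (Tmp * Psi) i \<le> 0" using rsum_Tmm[OF i] by simp
  then have "bb * (rsum Tmm i + rsum (Tmp * Psi) i) \<le> 0" using lam0 by (simp add: divide_nonpos_pos)
  then show ?thesis using e by simp
qed

lemma Jm_inv: "invertible_mat Jm" "minv Jm * Jm = 1\<^sub>m nm" "minv Jm \<in> carrier_mat nm nm"
  using zmat_inv[OF Jm_c Jm_off ones_c] Jm_row by auto

definition "CM = 1\<^sub>m np - Psi * H"
lemma CM_c: "CM \<in> carrier_mat np np" unfolding CM_def using Psi_props(1) H by auto

lemma E_R1: "E = R1 * CM"
proof -
  have "R1 * CM = R1 * 1\<^sub>m np - R1 * (Psi * H)" unfolding CM_def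
    by (rule mult_minus_distrib_mat[OF R1_c]) (use Psi_props(1) H in auto)
  also have "\<dots> = R1 - R1 * Psi * H" using R1_c Psi_props(1) H by simp
  also have "\<dots> = E"
  proof (rule eq_matI)
    fix i j assume "i < dim_row E" "j < dim_col E"
    then have ij: "i < np" "j < np" using E by auto
    have "R1 $$ (i,j) = E $$ (i,j) + (R1 * Psi * H) $$ (i,j)"
      using arg_cong[OF R1_eq, of "\<lambda>M. M $$ (i,j)"] ij E R1_c Psi_props(1) H
      by (simp del: index_mult_mat add: index_mult_mat(2,3))
    then show "(R1 - R1 * Psi * H) $$ (i,j) = E $$ (i,j)"
      using ij E R1_c Psi_props(1) H by (simp del: index_mult_mat add: index_mult_mat(2,3))
  qed (use E R1_c Psi_props(1) H in auto)
  finally show ?thesis by simp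
qed

end

lemma mv_zero: "A \<in> carrier_mat r c \<Longrightarrow> A *\<^sub>v 0\<^sub>v c = (0\<^sub>v r :: real vec)"
  by (intro eq_vecI) auto

lemma mv_smult: "A \<in> carrier_mat r c \<Longrightarrow> v \<in> carrier_vec c \<Longrightarrow> i < r \<Longrightarrow>
  ((s \<cdot>\<^sub>m A) *\<^sub>v v) $ i = (s::real) * (A *\<^sub>v v) $ i"
  using mult_vec_sum[of A r c v i] mult_vec_sum[of "s \<cdot>\<^sub>m A" r c v i] by (simp add: sum_distrib_left algebra_simps)

lemma mv_minus: "(A :: real mat) \<in> carrier_mat r c \<Longrightarrow> B \<in> carrier_mat r c \<Longrightarrow> v \<in> carrier_vec c \<Longrightarrow> i < r \<Longrightarrow>
  ((A - B) *\<^sub>v v) $ i = (A *\<^sub>v v) $ i - (B *\<^sub>v v) $ i"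
proof -
  assume a: "A \<in> carrier_mat r c" "B \<in> carrier_mat r c" "v \<in> carrier_vec c" "i < r"
  have "A - B \<in> carrier_mat r c" using a by auto
  then show ?thesis
    using mult_vec_sum[of A r c v i] mult_vec_sum[of B r c v i] mult_vec_sum[of "A - B" r c v i] a
    by (simp add: sum_subtractf left_diff_distrib)
qed

lemma mv_add: "(A :: real mat) \<in> carrier_mat r c \<Longrightarrow> B \<in> carrier_mat r c \<Longrightarrow> v \<in> carrier_vec c \<Longrightarrow> i < r \<Longrightarrow>
  ((A + B) *\<^sub>v v) $ i = (A *\<^sub>v v) $ i + (B *\<^sub>v v) $ i"
  using mult_vec_sum[of A r c v i] mult_vec_sum[of B r c v i] mult_vec_sum[of "A + B" r c v i]
  by (simp add: sum.distrib algebra_simps)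

lemma mv_one: "v \<in> carrier_vec r \<Longrightarrow> i < r \<Longrightarrow> (1\<^sub>m r *\<^sub>v v) $ i = (v $ i :: real)"
  by simp

context setup7 begin

lemma CM_ker: assumes x: "x \<in> carrier_vec np" and cx: "CM *\<^sub>v x = 0\<^sub>v np" shows "x = 0\<^sub>v np"
proof -
  define h where "h = H *\<^sub>v x"
  have hc: "h \<in> carrier_vec nm" unfolding h_def using H x by auto
  have PH: "Psi * H \<in> carrier_mat np np" using Psi_props(1) H by auto
  have xh: "x = Psi *\<^sub>v h"
  proof (rule eq_vecI)
    fix i assume "i < dim_vec (Psi *\<^sub>v h)"
    then have i: "i < np" using Psi_props(1) by auto
    have "(CM *\<^sub>v x) $ i = x $ i - ((Psi * H) *\<^sub>v x) $ i"
      unfolding CM_def using mv_minus[OF one_carrier_mat PH x i] mv_one[OF x i] by simp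
    also have "(Psi * H) *\<^sub>v x = Psi *\<^sub>v h" unfolding h_def using Psi_props(1) H x by simp
    finally show "x $ i = (Psi *\<^sub>v h) $ i" using cx i by simp
  qed (use x Psi_props(1) in auto)
  have Ex: "E *\<^sub>v x = 0\<^sub>v np"
  proof -
    have "E *\<^sub>v x = (R1 * CM) *\<^sub>v x" using E_R1 by simp
    also have "\<dots> = R1 *\<^sub>v (CM *\<^sub>v x)" using R1_c CM_c x by simp
    finally show ?thesis unfolding cx using mv_zero[OF R1_c] by simp
  qed
  have Nx: "N *\<^sub>v (x @\<^sub>v 0\<^sub>v nm) = 0\<^sub>v np @\<^sub>v h"
  proof -
    have "N *\<^sub>v (x @\<^sub>v 0\<^sub>v nm) = (E *\<^sub>v x + G *\<^sub>v 0\<^sub>v nm) @\<^sub>v (H *\<^sub>v x + F *\<^sub>v 0\<^sub>v nm)"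
      unfolding EGHF_N[symmetric] by (rule four_block_mat_mult_vec[OF E G H F x zero_carrier_vec])
    then show ?thesis unfolding Ex h_def[symmetric] mv_zero[OF G] mv_zero[OF F] using hc by simp
  qed
  have BA: "Bm *\<^sub>v (x @\<^sub>v 0\<^sub>v nm) = Am *\<^sub>v (0\<^sub>v np @\<^sub>v h)"
  proof -
    have "Bm *\<^sub>v (x @\<^sub>v 0\<^sub>v nm) = (Am * N) *\<^sub>v (x @\<^sub>v 0\<^sub>v nm)" using AN by simp
    also have "\<dots> = Am *\<^sub>v (N *\<^sub>v (x @\<^sub>v 0\<^sub>v nm))" using Am_c N_c x by simp
    finally show ?thesis unfolding Nx .
  qed
  have B2: "Bm *\<^sub>v (x @\<^sub>v 0\<^sub>v nm) = ((1\<^sub>m np + bb \<cdot>\<^sub>m Tpp) *\<^sub>v x + (aa \<cdot>\<^sub>m Tpm) *\<^sub>v 0\<^sub>v nm) @\<^sub>v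
       ((bb \<cdot>\<^sub>m Tmp) *\<^sub>v x + (1\<^sub>m nm + aa \<cdot>\<^sub>m Tmm) *\<^sub>v 0\<^sub>v nm)"
    unfolding Bm_def by (rule four_block_mat_mult_vec[OF blocks_c(5-8) x zero_carrier_vec])
  have A2: "Am *\<^sub>v (0\<^sub>v np @\<^sub>v h) = ((1\<^sub>m np - aa \<cdot>\<^sub>m Tpp) *\<^sub>v 0\<^sub>v np + (- (bb \<cdot>\<^sub>m Tpm)) *\<^sub>v h) @\<^sub>v
       ((- (aa \<cdot>\<^sub>m Tmp)) *\<^sub>v 0\<^sub>v np + (1\<^sub>m nm - bb \<cdot>\<^sub>m Tmm) *\<^sub>v h)"
    unfolding Am_def by (rule four_block_mat_mult_vec[OF blocks_c(1-4) zero_carrier_vec hc])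
  have comp: "((bb \<cdot>\<^sub>m Tmp) *\<^sub>v x) $ i = ((1\<^sub>m nm - bb \<cdot>\<^sub>m Tmm) *\<^sub>v h) $ i" if i: "i < nm" for i
  proof -
    have "(Bm *\<^sub>v (x @\<^sub>v 0\<^sub>v nm)) $ (np + i) = (Am *\<^sub>v (0\<^sub>v np @\<^sub>v h)) $ (np + i)" using BA by simp
    then show ?thesis unfolding B2 A2 using i x hc blocks_c carrier_matD[OF Tpp] carrier_matD[OF Tpm]
      carrier_matD[OF Tmp] carrier_matD[OF Tmm]
      mv_zero[OF blocks_c(6)] mv_zero[OF blocks_c(8)] mv_zero[OF blocks_c(1)] mv_zero[OF blocks_c(3)]
      by simp
  qed
  have Jh: "Jm *\<^sub>v h = 0\<^sub>v nm"
  proof (rule eq_vecI)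
    fix i assume "i < dim_vec (0\<^sub>v nm :: real vec)"
    then have i: "i < nm" by simp
    have TP: "Tmp * Psi \<in> carrier_mat nm nm" using Tmp Psi_props(1) by auto
    have e1: "((bb \<cdot>\<^sub>m Tmp) *\<^sub>v x) $ i = bb * ((Tmp * Psi) *\<^sub>v h) $ i"
      using mv_smult[OF Tmp x i] xh Tmp Psi_props(1) hc by simp
    have e2: "((1\<^sub>m nm - bb \<cdot>\<^sub>m Tmm) *\<^sub>v h) $ i = h $ i - bb * (Tmm *\<^sub>v h) $ i"
      using mv_minus[OF one_carrier_mat _ hc i, of "bb \<cdot>\<^sub>m Tmm"] mv_smult[OF Tmm hc i] mv_one[OF hc i] Tmm by simp
    have "(Jm *\<^sub>v h) $ i = h $ i - bb * ((Tmm *\<^sub>v h) $ i + ((Tmp * Psi) *\<^sub>v h) $ i)"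
      unfolding Jm_def using mv_minus[OF one_carrier_mat _ hc i, of "bb \<cdot>\<^sub>m (Tmm + Tmp * Psi)"]
        mv_smult[OF _ hc i, of "Tmm + Tmp * Psi"] mv_add[OF Tmm TP hc i] mv_one[OF hc i] Tmm TP by simp
    then show "(Jm *\<^sub>v h) $ i = 0\<^sub>v nm $ i" using comp[OF i] e1 e2 i by (simp add: algebra_simps)
  qed (use Jm_c in auto)
  have "h = 1\<^sub>m nm *\<^sub>v h" using hc by simp
  also have "1\<^sub>m nm = minv Jm * Jm" using Jm_inv(2) by simp
  also have "(minv Jm * Jm) *\<^sub>v h = minv Jm *\<^sub>v (Jm *\<^sub>v h)" by (rule assoc_mult_mat_vec[OF Jm_inv(3) Jm_c hc])
  also have "\<dots> = 0\<^sub>v nm" unfolding Jh using mv_zero[OF Jm_inv(3)] .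
  finally have "h = 0\<^sub>v nm" .
  then show ?thesis using xh mv_zero[OF Psi_props(1)] by simp
qed

lemma CM_inv: "invertible_mat CM" "CM * minv CM = 1\<^sub>m np" "minv CM \<in> carrier_mat np np"
proof -
  have "det CM \<noteq> 0" using det_0_iff_vec_prod_zero_field[OF CM_c] CM_ker by auto
  from det_non_zero_imp_unit[OF CM_c this, of "()"]
  obtain B where B: "B \<in> carrier_mat np np" "CM * B = 1\<^sub>m np"
    unfolding Units_def ring_mat_def by auto
  note m = minv_eq[OF CM_c B]
  show "invertible_mat CM" "CM * minv CM = 1\<^sub>m np" "minv CM \<in> carrier_mat np np" using m B by auto
qed

lemma E_minv: "E * minv CM = R1"
proof -
  have c: "minv CM \<in> carrier_mat np np" by (rule CM_inv(3))
  have "E * minv CM = R1 * CM * minv CM" using E_R1 by simp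
  also have "\<dots> = R1 * (CM * minv CM)" using R1_c CM_c c by simp
  also have "\<dots> = R1" using CM_inv R1_c by simp
  finally show ?thesis .
qed

end

theorem theorem7:
  fixes np nm :: nat and T Tpp Tpm Tmp Tmm Psi E G H F RD :: "real mat"
    and lam mu :: real
  assumes np: "np > 0" and nm: "nm > 0"
    and Tpp: "Tpp \<in> carrier_mat np np" and Tpm: "Tpm \<in> carrier_mat np nm"
    and Tmp: "Tmp \<in> carrier_mat nm np" and Tmm: "Tmm \<in> carrier_mat nm nm"
    and T: "T = four_block_mat Tpp Tpm Tmp Tmm"
    and gen: "generator (np + nm) T"
    and Psi: "min_nonneg_sol np nm
                (\<lambda>X. Tpm + X * Tmm + Tpp * X + X * Tmp * X = 0\<^sub>m np nm) Psi"
    and lam: "lam > 0" "\<forall>i<np+nm. \<bar>T $$ (i,i)\<bar> \<le> lam"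
    and mu: "mu > 0" "\<forall>i<np+nm. \<bar>T $$ (i,i)\<bar> \<le> mu"
    and EGHF: "four_block_mat E G H F =
       minv (four_block_mat (1\<^sub>m np - (1/mu) \<cdot>\<^sub>m Tpp) (- ((1/lam) \<cdot>\<^sub>m Tpm))
                            (- ((1/mu) \<cdot>\<^sub>m Tmp)) (1\<^sub>m nm - (1/lam) \<cdot>\<^sub>m Tmm))
       * four_block_mat (1\<^sub>m np + (1/lam) \<cdot>\<^sub>m Tpp) ((1/mu) \<cdot>\<^sub>m Tpm)
                        ((1/lam) \<cdot>\<^sub>m Tmp) (1\<^sub>m nm + (1/mu) \<cdot>\<^sub>m Tmm)"
    and E: "E \<in> carrier_mat np np" and G: "G \<in> carrier_mat np nm"
    and H: "H \<in> carrier_mat nm np" and F: "F \<in> carrier_mat nm nm"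
    and RD: "min_nonneg_sol (np + nm) (np + nm)
       (\<lambda>R. R * R * four_block_mat (0\<^sub>m np np) (0\<^sub>m np nm) (0\<^sub>m nm np) F
            + R * four_block_mat (0\<^sub>m np np) G H (0\<^sub>m nm nm)
            + four_block_mat E (0\<^sub>m np nm) (0\<^sub>m nm np) (0\<^sub>m nm nm) = R) RD"
  shows "let K = Tpp + Psi * Tmp;
             R1 = E * minv (1\<^sub>m np - Psi * H)
         in invertible_mat (1\<^sub>m np - Psi * H) \<and>
            invertible_mat (1\<^sub>m np - (1/mu) \<cdot>\<^sub>m K) \<and>
            R1 = minv (1\<^sub>m np - (1/mu) \<cdot>\<^sub>m K) * (1\<^sub>m np + (1/lam) \<cdot>\<^sub>m K) \<and>
            RD = four_block_mat R1 (R1 * Psi) (0\<^sub>m nm np) (0\<^sub>m nm nm)"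
proof -
  interpret setup7 np nm T Tpp Tpm Tmp Tmm Psi E G H F RD lam mu
    by (rule setup7.intro[OF np nm Tpp Tpm Tmp Tmm T gen Psi lam(1) lam(2) mu(1) mu(2) EGHF E G H F RD])
  have c1: "invertible_mat (1\<^sub>m np - Psi * H)" using CM_inv(1) unfolding CM_def .
  have c2: "invertible_mat (1\<^sub>m np - (1/mu) \<cdot>\<^sub>m (Tpp + Psi * Tmp))"
    using W_props(1) unfolding Ppsi_def Kpsi_def .
  have c3: "E * minv (1\<^sub>m np - Psi * H) = minv (1\<^sub>m np - (1/mu) \<cdot>\<^sub>m (Tpp + Psi * Tmp)) * (1\<^sub>m np + (1/lam) \<cdot>\<^sub>m (Tpp + Psi * Tmp))"
    using E_minv unfolding CM_def R1_def Wpsi_def Ppsi_def Rpsi_def Kpsi_def .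
  have c4: "RD = four_block_mat (E * minv (1\<^sub>m np - Psi * H)) (E * minv (1\<^sub>m np - Psi * H) * Psi) (0\<^sub>m nm np) (0\<^sub>m nm nm)"
    using RD_final unfolding E_minv[symmetric] CM_def .
  show ?thesis unfolding Let_def using c1 c2 c3 c4 by (intro conjI) auto
qed

end
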